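(* Let $M^{\circ}$ be a deterministic abstract simulator, and let $\mathbf{M}^{\star}=\langle M^{\star},\mathcal{X},q^{\star}\rangle$ be a target block MDP whose latent transitions and rewards form an $\eta$-perturbation of $M^{\circ}$ for some $\eta<1/2$, and whose initial latent state $s_1$ satisfies $\Pr(s_1\ne s_{\text{init}})=\epsilon_0$. Let $\mathcal{F}\subseteq\{\mathcal{X}^2\to\Delta(\mathcal{A})\}$ be a finite function class satisfying realizability with respect to $\mathbf{M}^{\star}$. Then for any $\epsilon>0$ and $\delta\in(0,1)$, TASID with oracle access to $\mathbf{M}^{\star}$, optimization-oracle access to $\mathcal{F}$ and inputs $M^{\circ},\eta,\epsilon,\delta$ (with an appropriate per-step sample size $n_D$) executes \[ n=O\!\left(\frac{H^4|\mathcal{A}|^3\ln(|\mathcal{F}|/\delta)}{\epsilon(1-2\eta)^2}\right) \] episodes and returns a practicable policy $\pi$ which, with probability at least $1-\delta$, satisfies $V^{\pi}_{\mathbf{M}^{\star}}\ge V^{\rho\circ\phi^{\star}}_{\mathbf{M}^{\star}}-\epsilon-H\epsilon_0$, where $\rho$ is the robust abstract policy returned by $\mathrm{RDP}(M^{\circ},\eta)$.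
   Context: Episodic MDP $M=\langle\mathcal{S},\mathcal{A},s_{\text{init}},H,T,R\rangle$: finite $\mathcal{S},\mathcal{A}$, initial state $s_{\text{init}}$, horizon $H$, $T_h(\cdot\mid s,a)\in\Delta(\mathcal{S})$, $R_h(s,a)\in[0,1]$. The abstract simulator $M^{\circ}=\langle\mathcal{S},\mathcal{A},s_{\text{init}},H,T^{\circ},R^{\circ}\rangle$ is deterministic: $T^{\circ}_h(s'\mid s,a)\in\{0,1\}$. Block MDP $\mathbf{M}^{\star}=\langle M^{\star},\mathcal{X},q^{\star}\rangle$ with latent MDP $M^{\star}$ (states $\mathcal{S}$, actions $\mathcal{A}$, horizon $H$, transitions $T^{\star}$, rewards $R^{\star}$), observation space $\mathcal{X}$, emission $q^{\star}:\mathcal{S}\to\Delta(\mathcal{X})$ with disjoint supports, hence a perfect decoder $\phi^{\star}:\mathcal{X}\to\mathcal{S}$. Episode: $s_1$ drawn as stated; at step $h$ observe $x_h\sim q^{\star}(\cdot\mid s_h)$, take $a_h$, receive $r_h=R^{\star}_h(s_h,a_h)$, $s_{h+1}\sim T^{\star}_h(\cdot\mid s_h,a_h)$; latent states unobserved. Observation-level transition $\mathbf{T}^{\star}_h(x'\mid x,a)=q^{\star}(x'\mid\phi^{\star}(x'))T^{\star}_h(\phi^{\star}(x')\mid\phi^{\star}(x),a)$. $\eta$-perturbation: there is $\xi:[H]\times\mathcal{S}\times\mathcal{A}\to\Delta(\mathcal{A})$ with $\xi_h(a\mid s,a)\ge1-\eta$ and $T^{\star}_h(s'\mid s,a)=\sum_{a'}T^{\circ}_h(s'\mid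 s,a')\xi_h(a'\mid s,a)$, $R^{\star}_h(s,a)=\sum_{a'}R^{\circ}_h(s,a')\xi_h(a'\mid s,a)$. Realizability: for every $h$ there is $f^{\star}_h\in\mathcal{F}$ with $f^{\star}_h(a\mid x,x')=\mathbf{T}^{\star}_h(x'\mid x,a)/\sum_{a'}\mathbf{T}^{\star}_h(x'\mid x,a')$ for all $x,x'$ that can occur at steps $h,h+1$. Practicable policy: $\pi_h(x_{1:h})\in\mathcal{A}$, value $V^{\pi}_{\mathbf{M}^{\star}}=\mathbb{E}[r_1+\dots+r_H]$; $\rho\circ\phi^{\star}$ is the practicable policy $x_h\mapsto\rho_h(\phi^{\star}(x_h))$. $\mathrm{RDP}(M^{\circ},\eta)$: $\tilde V_{H+1}\equiv0$; for $h=H,\dots,1$: $\tilde Q_h(s,a)=R^{\circ}_h(s,a)+\sum_{s'}T^{\circ}_h(s'\mid s,a)\tilde V_{h+1}(s')$, $\tilde V_h(s)=(1-\eta)\max_a\tilde Q_h(s,a)+\eta\min_a\tilde Q_h(s,a)$; return $\rho_h(s)\in\arg\max_a\tilde Q_h(s,a)$. TASID with per-step sample size $n_D$: $\rho=\mathrm{RDP}(M^{\circ},\eta)$; $\pi_1(x)=\rho_1(s_{\text{init}})$. For $h=1,\dots,H-1$: collect $n_D$ triples $(x_h,a_h,x_{h+1})$, each from a fresh episode following $\pi_1,\dots,\pi_{h-1}$ for $h-1$ steps, then a uniformly random $a_h$; $f_h\in\arg\max_{f\in\mathcal{F}}\sum\ln f(a_h\mid x_h,x_{h+1})$; $\alpha_h(x,x')=\arg\max_a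 f_h(a\mid x,x')$; $\phi_{h+1}(x_{1:h+1})$ is the state reached in $M^{\circ}$ from $s_{\text{init}}$ via actions $\alpha_1(x_1,x_2),\dots,\alpha_h(x_h,x_{h+1})$; $\pi_{h+1}(x_{1:h+1})=\rho_{h+1}(\phi_{h+1}(x_{1:h+1}))$. Return $\pi=(\pi_1,\dots,\pi_H)$. *)

theory Defs
  imports "HOL-Probability.Probability"
begin

text \<open>
Steps are indexed h = 1..H.  The latent state space is a finite carrier
set S (of an arbitrary type 's), the action space a finite nonempty carrier set A.
The deterministic abstract simulator is given by its successor function Tc h s a
(so T-circ_h(s'|s,a) = 1 iff s' = Tc h s a) and its reward Rc h s a.
A practicable (deterministic, history dependent) policy is pi :: nat => 'x list => 'a,
pi h [x_1,...,x_h] being the action at step h.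
\<close>

definition det_simulator ::
  "nat \<Rightarrow> 's set \<Rightarrow> 'a set \<Rightarrow> 's \<Rightarrow> (nat \<Rightarrow> 's \<Rightarrow> 'a \<Rightarrow> 's) \<Rightarrow> (nat \<Rightarrow> 's \<Rightarrow> 'a \<Rightarrow> real) \<Rightarrow> bool" where
  "det_simulator H S A sinit Tc Rc \<longleftrightarrow>
     finite S \<and> finite A \<and> A \<noteq> {} \<and> sinit \<in> S \<and>
     (\<forall>h\<in>{1..H}. \<forall>s\<in>S. \<forall>a\<in>A. Tc h s a \<in> S \<and> 0 \<le> Rc h s a \<and> Rc h s a \<le> 1)"

definition block_mdp ::
  "nat \<Rightarrow> 's set \<Rightarrow> 'a set \<Rightarrow> 's pmf \<Rightarrow> (nat \<Rightarrow> 's \<Rightarrow> 'a \<Rightarrow> 's pmf) \<Rightarrow> (nat \<Rightarrow> 's \<Rightarrow> 'a \<Rightarrow> real)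
   \<Rightarrow> ('s \<Rightarrow> 'x pmf) \<Rightarrow> bool" where
  "block_mdp H S A init T R q \<longleftrightarrow>
     set_pmf init \<subseteq> S \<and>
     (\<forall>h\<in>{1..H}. \<forall>s\<in>S. \<forall>a\<in>A. set_pmf (T h s a) \<subseteq> S \<and> 0 \<le> R h s a \<and> R h s a \<le> 1) \<and>
     (\<forall>s\<in>S. \<forall>s'\<in>S. s \<noteq> s' \<longrightarrow> set_pmf (q s) \<inter> set_pmf (q s') = {})"

definition eta_perturbation ::
  "nat \<Rightarrow> 's set \<Rightarrow> 'a set \<Rightarrow> (nat \<Rightarrow> 's \<Rightarrow> 'a \<Rightarrow> 's) \<Rightarrow> (nat \<Rightarrow> 's \<Rightarrow> 'a \<Rightarrow> real)
   \<Rightarrow> (nat \<Rightarrow> 's \<Rightarrow> 'a \<Rightarrow> 's pmf) \<Rightarrow> (nat \<Rightarrow> 's \<Rightarrow> 'a \<Rightarrow> real) \<Rightarrow> real \<Rightarrow> bool" where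
  "eta_perturbation H S A Tc Rc T R \<eta> \<longleftrightarrow>
     (\<exists>\<xi> :: nat \<Rightarrow> 's \<Rightarrow> 'a \<Rightarrow> 'a pmf.
        \<forall>h\<in>{1..H}. \<forall>s\<in>S. \<forall>a\<in>A.
          set_pmf (\<xi> h s a) \<subseteq> A \<and> pmf (\<xi> h s a) a \<ge> 1 - \<eta> \<and>
          (\<forall>s'. pmf (T h s a) s' = (\<Sum>a'\<in>A. (if Tc h s a' = s' then 1 else 0) * pmf (\<xi> h s a) a')) \<and>
          R h s a = (\<Sum>a'\<in>A. Rc h s a' * pmf (\<xi> h s a) a'))"

text \<open>The perfect decoder phi-star (well defined by disjointness of emission supports).\<close>
definition decoder :: "'s set \<Rightarrow> ('s \<Rightarrow> 'x pmf) \<Rightarrow> 'x \<Rightarrow> 's" where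
  "decoder S q x = (THE s. s \<in> S \<and> x \<in> set_pmf (q s))"

definition obs_trans ::
  "'s set \<Rightarrow> (nat \<Rightarrow> 's \<Rightarrow> 'a \<Rightarrow> 's pmf) \<Rightarrow> ('s \<Rightarrow> 'x pmf) \<Rightarrow> nat \<Rightarrow> 'x \<Rightarrow> 'a \<Rightarrow> 'x \<Rightarrow> real" where
  "obs_trans S T q h x a x' =
     pmf (q (decoder S q x')) x' * pmf (T h (decoder S q x) a) (decoder S q x')"

fun reach :: "'a set \<Rightarrow> 's pmf \<Rightarrow> (nat \<Rightarrow> 's \<Rightarrow> 'a \<Rightarrow> 's pmf) \<Rightarrow> nat \<Rightarrow> 's set" where
  "reach A init T 0 = {}"
| "reach A init T (Suc 0) = set_pmf init"
| "reach A init T (Suc (Suc h)) = (\<Union>s\<in>reach A init T (Suc h). \<Union>a\<in>A. set_pmf (T (Suc h) s a))"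

definition obs_occurs ::
  "'a set \<Rightarrow> 's pmf \<Rightarrow> (nat \<Rightarrow> 's \<Rightarrow> 'a \<Rightarrow> 's pmf) \<Rightarrow> ('s \<Rightarrow> 'x pmf) \<Rightarrow> nat \<Rightarrow> 'x \<Rightarrow> bool" where
  "obs_occurs A init T q h x \<longleftrightarrow> (\<exists>s\<in>reach A init T h. x \<in> set_pmf (q s))"

definition realizable ::
  "nat \<Rightarrow> 's set \<Rightarrow> 'a set \<Rightarrow> 's pmf \<Rightarrow> (nat \<Rightarrow> 's \<Rightarrow> 'a \<Rightarrow> 's pmf) \<Rightarrow> ('s \<Rightarrow> 'x pmf)
   \<Rightarrow> ('x \<Rightarrow> 'x \<Rightarrow> 'a pmf) set \<Rightarrow> bool" where
  "realizable H S A init T q F \<longleftrightarrow>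
     (\<forall>h\<in>{1..<H}. \<exists>f\<in>F. \<forall>x x'.
        obs_occurs A init T q h x \<and> (\<Sum>a'\<in>A. obs_trans S T q h x a' x') > 0 \<longrightarrow>
        (\<forall>a\<in>A. pmf (f x x') a = obs_trans S T q h x a x' / (\<Sum>a'\<in>A. obs_trans S T q h x a' x')))"

text \<open>Value of a practicable policy. vtail k h xs s: expected reward of the remaining
k steps starting at step h in latent state s, with past observations xs.\<close>
fun vtail ::
  "(nat \<Rightarrow> 's \<Rightarrow> 'a \<Rightarrow> 's pmf) \<Rightarrow> (nat \<Rightarrow> 's \<Rightarrow> 'a \<Rightarrow> real) \<Rightarrow> ('s \<Rightarrow> 'x pmf) \<Rightarrow> (nat \<Rightarrow> 'x list \<Rightarrow> 'a)
   \<Rightarrow> nat \<Rightarrow> nat \<Rightarrow> 'x list \<Rightarrow> 's \<Rightarrow> real" where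
  "vtail T R q \<pi> 0 h xs s = 0"
| "vtail T R q \<pi> (Suc k) h xs s =
     measure_pmf.expectation (q s) (\<lambda>x.
       R h s (\<pi> h (xs @ [x])) +
       measure_pmf.expectation (T h s (\<pi> h (xs @ [x]))) (\<lambda>s'. vtail T R q \<pi> k (Suc h) (xs @ [x]) s'))"

definition policy_value ::
  "nat \<Rightarrow> 's pmf \<Rightarrow> (nat \<Rightarrow> 's \<Rightarrow> 'a \<Rightarrow> 's pmf) \<Rightarrow> (nat \<Rightarrow> 's \<Rightarrow> 'a \<Rightarrow> real) \<Rightarrow> ('s \<Rightarrow> 'x pmf)
   \<Rightarrow> (nat \<Rightarrow> 'x list \<Rightarrow> 'a) \<Rightarrow> real" where
  "policy_value H init T R q \<pi> = measure_pmf.expectation init (\<lambda>s. vtail T R q \<pi> H 1 [] s)"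

definition compose_decoder :: "'s set \<Rightarrow> ('s \<Rightarrow> 'x pmf) \<Rightarrow> (nat \<Rightarrow> 's \<Rightarrow> 'a) \<Rightarrow> nat \<Rightarrow> 'x list \<Rightarrow> 'a" where
  "compose_decoder S q \<rho> h xs = \<rho> h (decoder S q (last xs))"

text \<open>Robust dynamic programming RDP(M-circ, eta). rdpV k h s is V-tilde_h(s) where k = H+1-h.\<close>
fun rdpV ::
  "'a set \<Rightarrow> (nat \<Rightarrow> 's \<Rightarrow> 'a \<Rightarrow> 's) \<Rightarrow> (nat \<Rightarrow> 's \<Rightarrow> 'a \<Rightarrow> real) \<Rightarrow> real \<Rightarrow> nat \<Rightarrow> nat \<Rightarrow> 's \<Rightarrow> real" where
  "rdpV A Tc Rc \<eta> 0 h s = 0"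
| "rdpV A Tc Rc \<eta> (Suc k) h s =
     (1 - \<eta>) * (MAX a\<in>A. Rc h s a + rdpV A Tc Rc \<eta> k (Suc h) (Tc h s a)) +
     \<eta> * (MIN a\<in>A. Rc h s a + rdpV A Tc Rc \<eta> k (Suc h) (Tc h s a))"

definition rdpQ ::
  "nat \<Rightarrow> 'a set \<Rightarrow> (nat \<Rightarrow> 's \<Rightarrow> 'a \<Rightarrow> 's) \<Rightarrow> (nat \<Rightarrow> 's \<Rightarrow> 'a \<Rightarrow> real) \<Rightarrow> real \<Rightarrow> nat \<Rightarrow> 's \<Rightarrow> 'a \<Rightarrow> real" where
  "rdpQ H A Tc Rc \<eta> h s a = Rc h s a + rdpV A Tc Rc \<eta> (H - h) (Suc h) (Tc h s a)"

text \<open>rho is a possible output of RDP(M-circ, eta) (any tie breaking of the argmax).\<close>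
definition rdp_output ::
  "nat \<Rightarrow> 's set \<Rightarrow> 'a set \<Rightarrow> (nat \<Rightarrow> 's \<Rightarrow> 'a \<Rightarrow> 's) \<Rightarrow> (nat \<Rightarrow> 's \<Rightarrow> 'a \<Rightarrow> real) \<Rightarrow> real
   \<Rightarrow> (nat \<Rightarrow> 's \<Rightarrow> 'a) \<Rightarrow> bool" where
  "rdp_output H S A Tc Rc \<eta> \<rho> \<longleftrightarrow>
     (\<forall>h\<in>{1..H}. \<forall>s\<in>S. \<rho> h s \<in> A \<and> (\<forall>a\<in>A. rdpQ H A Tc Rc \<eta> h s a \<le> rdpQ H A Tc Rc \<eta> h s (\<rho> h s)))"

text \<open>TASID.  dec h s [alpha_h, ...] [x_h, x_{h+1}, ...] runs the simulator from state s at
step h along the decoded actions alpha_h(x_h,x_{h+1}), ...; it stops when the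
observations (or the learned alphas) run out.\<close>
fun dec :: "(nat \<Rightarrow> 's \<Rightarrow> 'a \<Rightarrow> 's) \<Rightarrow> nat \<Rightarrow> 's \<Rightarrow> ('x \<Rightarrow> 'x \<Rightarrow> 'a) list \<Rightarrow> 'x list \<Rightarrow> 's" where
  "dec Tc h s (\<alpha> # \<alpha>s) (x # x' # xs) = dec Tc (Suc h) (Tc h s (\<alpha> x x')) \<alpha>s (x' # xs)"
| "dec Tc h s _ _ = s"

definition tasid_policy ::
  "(nat \<Rightarrow> 's \<Rightarrow> 'a \<Rightarrow> 's) \<Rightarrow> 's \<Rightarrow> (nat \<Rightarrow> 's \<Rightarrow> 'a) \<Rightarrow> ('x \<Rightarrow> 'x \<Rightarrow> 'a) list \<Rightarrow> nat \<Rightarrow> 'x list \<Rightarrow> 'a" where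
  "tasid_policy Tc sinit \<rho> \<alpha>s h xs = \<rho> h (dec Tc 1 sinit \<alpha>s xs)"

text \<open>roll k: joint law of (s_{k+1}, x_{1:k}) after following pi for k steps in the target.\<close>
fun roll ::
  "'s pmf \<Rightarrow> (nat \<Rightarrow> 's \<Rightarrow> 'a \<Rightarrow> 's pmf) \<Rightarrow> ('s \<Rightarrow> 'x pmf) \<Rightarrow> (nat \<Rightarrow> 'x list \<Rightarrow> 'a) \<Rightarrow> nat \<Rightarrow> ('s \<times> 'x list) pmf" where
  "roll init T q \<pi> 0 = map_pmf (\<lambda>s. (s, [])) init"
| "roll init T q \<pi> (Suc k) =
     bind_pmf (roll init T q \<pi> k) (\<lambda>(s, xs).
       bind_pmf (q s) (\<lambda>x.
         map_pmf (\<lambda>s'. (s', xs @ [x])) (T (Suc k) s (\<pi> (Suc k) (xs @ [x])))))"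

definition sample_triple ::
  "'a set \<Rightarrow> 's pmf \<Rightarrow> (nat \<Rightarrow> 's \<Rightarrow> 'a \<Rightarrow> 's pmf) \<Rightarrow> ('s \<Rightarrow> 'x pmf) \<Rightarrow> (nat \<Rightarrow> 'x list \<Rightarrow> 'a) \<Rightarrow> nat
   \<Rightarrow> ('x \<times> 'a \<times> 'x) pmf" where
  "sample_triple A init T q \<pi> h =
     bind_pmf (roll init T q \<pi> (h - 1)) (\<lambda>(s, xs).
       bind_pmf (q s) (\<lambda>x.
         bind_pmf (pmf_of_set A) (\<lambda>a.
           bind_pmf (T h s a) (\<lambda>s'.
             map_pmf (\<lambda>x'. (x, a, x')) (q s')))))"

fun iid :: "nat \<Rightarrow> 'b pmf \<Rightarrow> 'b list pmf" where
  "iid 0 p = return_pmf []"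
| "iid (Suc n) p = bind_pmf p (\<lambda>z. map_pmf (\<lambda>zs. z # zs) (iid n p))"

text \<open>Likelihood of a data set under f (maximizing it is maximizing the log-likelihood).\<close>
definition likelihood :: "('x \<Rightarrow> 'x \<Rightarrow> 'a pmf) \<Rightarrow> ('x \<times> 'a \<times> 'x) list \<Rightarrow> real" where
  "likelihood f D = prod_list (map (\<lambda>(x, a, x'). pmf (f x x') a) D)"

definition mle_oracle ::
  "nat \<Rightarrow> ('x \<Rightarrow> 'x \<Rightarrow> 'a pmf) set \<Rightarrow> (nat \<Rightarrow> ('x \<times> 'a \<times> 'x) list \<Rightarrow> ('x \<Rightarrow> 'x \<Rightarrow> 'a pmf)) \<Rightarrow> bool" where
  "mle_oracle H F oracle \<longleftrightarrow>
     (\<forall>h\<in>{1..<H}. \<forall>D. oracle h D \<in> F \<and> (\<forall>g\<in>F. likelihood g D \<le> likelihood (oracle h D) D))"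

definition argmax_selector :: "'a set \<Rightarrow> (('a \<Rightarrow> real) \<Rightarrow> 'a) \<Rightarrow> bool" where
  "argmax_selector A sel \<longleftrightarrow> (\<forall>g. sel g \<in> A \<and> (\<forall>a\<in>A. g a \<le> g (sel g)))"

fun tasid_stage ::
  "'a set \<Rightarrow> 's pmf \<Rightarrow> (nat \<Rightarrow> 's \<Rightarrow> 'a \<Rightarrow> 's pmf) \<Rightarrow> ('s \<Rightarrow> 'x pmf) \<Rightarrow> (nat \<Rightarrow> 's \<Rightarrow> 'a \<Rightarrow> 's) \<Rightarrow> 's
   \<Rightarrow> (nat \<Rightarrow> 's \<Rightarrow> 'a) \<Rightarrow> (nat \<Rightarrow> ('x \<times> 'a \<times> 'x) list \<Rightarrow> ('x \<Rightarrow> 'x \<Rightarrow> 'a pmf)) \<Rightarrow> (('a \<Rightarrow> real) \<Rightarrow> 'a)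
   \<Rightarrow> nat \<Rightarrow> nat \<Rightarrow> ('x \<Rightarrow> 'x \<Rightarrow> 'a) list pmf" where
  "tasid_stage A init T q Tc sinit \<rho> oracle sel nD 0 = return_pmf []"
| "tasid_stage A init T q Tc sinit \<rho> oracle sel nD (Suc h) =
     bind_pmf (tasid_stage A init T q Tc sinit \<rho> oracle sel nD h) (\<lambda>\<alpha>s.
       map_pmf (\<lambda>D. \<alpha>s @ [\<lambda>x x'. sel (\<lambda>a. pmf (oracle (Suc h) D x x') a)])
         (iid nD (sample_triple A init T q (tasid_policy Tc sinit \<rho> \<alpha>s) (Suc h))))"

text \<open>Law of the practicable policy returned by TASID (uses (H-1)*nD episodes).\<close>
definition tasid ::
  "nat \<Rightarrow> 'a set \<Rightarrow> 's pmf \<Rightarrow> (nat \<Rightarrow> 's \<Rightarrow> 'a \<Rightarrow> 's pmf) \<Rightarrow> ('s \<Rightarrow> 'x pmf) \<Rightarrow> (nat \<Rightarrow> 's \<Rightarrow> 'a \<Rightarrow> 's) \<Rightarrow> 's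
   \<Rightarrow> (nat \<Rightarrow> 's \<Rightarrow> 'a) \<Rightarrow> (nat \<Rightarrow> ('x \<times> 'a \<times> 'x) list \<Rightarrow> ('x \<Rightarrow> 'x \<Rightarrow> 'a pmf)) \<Rightarrow> (('a \<Rightarrow> real) \<Rightarrow> 'a)
   \<Rightarrow> nat \<Rightarrow> (nat \<Rightarrow> 'x list \<Rightarrow> 'a) pmf" where
  "tasid H A init T q Tc sinit \<rho> oracle sel nD =
     map_pmf (tasid_policy Tc sinit \<rho>) (tasid_stage A init T q Tc sinit \<rho> oracle sel nD (H - 1))"

end

theory Submission
  imports Defs
begin


lemma exp_bind:
  fixes f :: "'b \<Rightarrow> real"
  assumes "\<And>y. y \<in> set_pmf (bind_pmf M N) \<Longrightarrow> \<bar>f y\<bar> \<le> B"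
  shows "measure_pmf.expectation (bind_pmf M N) f = measure_pmf.expectation M (\<lambda>x. measure_pmf.expectation (N x) f)"
proof -
  define g where "g y = max (- B) (min B (f y))" for y
  have B: "\<bar>g y\<bar> \<le> \<bar>B\<bar>" for y unfolding g_def by auto
  have gf: "g y = f y" if "y \<in> set_pmf (bind_pmf M N)" for y
    using assms[OF that] unfolding g_def by (auto simp: abs_le_iff)
  have e1: "measure_pmf.expectation (bind_pmf M N) f = measure_pmf.expectation (bind_pmf M N) g"
    using gf by (intro integral_cong_AE) (auto simp: AE_measure_pmf_iff)
  have e2: "measure_pmf.expectation (bind_pmf M N) g = measure_pmf.expectation M (\<lambda>x. measure_pmf.expectation (N x) g)"
    unfolding measure_pmf_bind
    by (rule integral_bind[where K="count_space UNIV" and B="\<bar>B\<bar>" and B'=1])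
       (auto simp: B measurable_measure_pmf measure_pmf.emeasure_space_1 space_subprob_algebra subprob_space_measure_pmf intro!: measure_pmf.finite_measure)
  have e3: "measure_pmf.expectation M (\<lambda>x. measure_pmf.expectation (N x) g) = measure_pmf.expectation M (\<lambda>x. measure_pmf.expectation (N x) f)"
  proof (intro integral_cong_AE)
    show "AE x in measure_pmf M. measure_pmf.expectation (N x) g = measure_pmf.expectation (N x) f"
      unfolding AE_measure_pmf_iff
    proof
      fix x assume "x \<in> set_pmf M"
      then show "measure_pmf.expectation (N x) g = measure_pmf.expectation (N x) f"
        using gf by (intro integral_cong_AE) (auto simp: AE_measure_pmf_iff)
    qed
  qed simp_all
  show ?thesis using e1 e2 e3 by simp
qed

lemma exp_int:
  fixes f :: "'b \<Rightarrow> real"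
  assumes "\<And>y. y \<in> set_pmf p \<Longrightarrow> \<bar>f y\<bar> \<le> B"
  shows "integrable (measure_pmf p) f"
  by (rule measure_pmf.integrable_const_bound[where B=B]) (auto simp: AE_measure_pmf_iff assms)

lemma exp_bounds:
  fixes f :: "'b \<Rightarrow> real"
  assumes "\<And>y. y \<in> set_pmf p \<Longrightarrow> a \<le> f y \<and> f y \<le> b"
  shows "a \<le> measure_pmf.expectation p f \<and> measure_pmf.expectation p f \<le> b"
proof -
  have int: "integrable (measure_pmf p) f"
    by (rule exp_int[where B="max \<bar>a\<bar> \<bar>b\<bar>"]) (use assms in force)
  have "measure_pmf.expectation p (\<lambda>_. a) \<le> measure_pmf.expectation p f"
    by (rule integral_mono_AE) (auto simp: int AE_measure_pmf_iff assms)
  moreover have "measure_pmf.expectation p f \<le> measure_pmf.expectation p (\<lambda>_. b)"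
    by (rule integral_mono_AE) (auto simp: int AE_measure_pmf_iff assms)
  ultimately show ?thesis by simp
qed

lemma exp_mono:
  fixes f g :: "'b \<Rightarrow> real"
  assumes "\<And>y. y \<in> set_pmf p \<Longrightarrow> \<bar>f y\<bar> \<le> B" "\<And>y. y \<in> set_pmf p \<Longrightarrow> \<bar>g y\<bar> \<le> B"
    "\<And>y. y \<in> set_pmf p \<Longrightarrow> f y \<le> g y"
  shows "measure_pmf.expectation p f \<le> measure_pmf.expectation p g"
  by (rule integral_mono_AE) (auto simp: exp_int[OF assms(1)] exp_int[OF assms(2)] AE_measure_pmf_iff assms(3))

lemma exp_add:
  fixes f g :: "'b \<Rightarrow> real"
  assumes "\<And>y. y \<in> set_pmf p \<Longrightarrow> \<bar>f y\<bar> \<le> B" "\<And>y. y \<in> set_pmf p \<Longrightarrow> \<bar>g y\<bar> \<le> B"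
  shows "measure_pmf.expectation p (\<lambda>y. f y + g y) = measure_pmf.expectation p f + measure_pmf.expectation p g"
  by (rule Bochner_Integration.integral_add) (auto simp: exp_int[OF assms(1)] exp_int[OF assms(2)])

lemma exp_diff:
  fixes f g :: "'b \<Rightarrow> real"
  assumes "\<And>y. y \<in> set_pmf p \<Longrightarrow> \<bar>f y\<bar> \<le> B" "\<And>y. y \<in> set_pmf p \<Longrightarrow> \<bar>g y\<bar> \<le> B"
  shows "measure_pmf.expectation p (\<lambda>y. f y - g y) = measure_pmf.expectation p f - measure_pmf.expectation p g"
  by (rule Bochner_Integration.integral_diff) (auto simp: exp_int[OF assms(1)] exp_int[OF assms(2)])

lemma exp_cmult:
  fixes f :: "'b \<Rightarrow> real"
  shows "measure_pmf.expectation p (\<lambda>y. c * f y) = c * measure_pmf.expectation p f"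
  by simp

lemma exp_const: "measure_pmf.expectation p (\<lambda>y. c) = (c::real)"
  by simp

lemma exp_sum:
  fixes f :: "'c \<Rightarrow> 'b \<Rightarrow> real"
  assumes "finite I" "\<And>i y. i \<in> I \<Longrightarrow> y \<in> set_pmf p \<Longrightarrow> \<bar>f i y\<bar> \<le> B"
  shows "measure_pmf.expectation p (\<lambda>y. \<Sum>i\<in>I. f i y) = (\<Sum>i\<in>I. measure_pmf.expectation p (f i))"
  by (rule Bochner_Integration.integral_sum) (auto intro: exp_int assms)


definition aok :: "'a set \<Rightarrow> ('x \<Rightarrow> 'x \<Rightarrow> 'a) list \<Rightarrow> bool" where
  "aok A \<alpha>s \<longleftrightarrow> (\<forall>\<alpha>\<in>set \<alpha>s. \<forall>x x'. \<alpha> x x' \<in> A)"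

lemma dec_snoc:
  "length ys = n \<Longrightarrow> 1 \<le> n \<Longrightarrow> n \<le> length \<alpha>s \<Longrightarrow>
   dec Tc j s \<alpha>s (ys @ [x']) = Tc (j + n - 1) (dec Tc j s \<alpha>s ys) ((\<alpha>s ! (n - 1)) (last ys) x')"
proof (induction ys arbitrary: j s \<alpha>s n)
  case Nil
  then show ?case by simp
next
  case (Cons y ys)
  obtain \<alpha> rest where as: "\<alpha>s = \<alpha> # rest" using Cons.prems by (cases \<alpha>s) auto
  show ?case
  proof (cases ys)
    case Nil
    then show ?thesis using Cons.prems as by simp
  next
    case (Cons y2 ys')
    have n2: "n \<ge> 2" using Cons.prems Cons by auto
    have l: "length ys = n - 1" "1 \<le> n - 1" "n - 1 \<le> length rest"
      using Cons.prems as Cons n2 by auto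
    note IH = Cons.IH[OF l, where j="Suc j" and s="Tc j s (\<alpha> y y2)"]
    have e1: "dec Tc j s \<alpha>s ((y # ys) @ [x']) = dec Tc (Suc j) (Tc j s (\<alpha> y y2)) rest (ys @ [x'])"
      by (simp add: as Cons)
    have e2: "dec Tc j s \<alpha>s (y # ys) = dec Tc (Suc j) (Tc j s (\<alpha> y y2)) rest ys"
      by (simp add: as Cons)
    have e3: "last (y # ys) = last ys" by (simp add: Cons)
    obtain m where m: "n = Suc (Suc m)" using n2 by (metis add_2_eq_Suc le_Suc_ex)
    have e4: "\<alpha>s ! (n - 1) = rest ! (n - 1 - 1)" by (simp add: as m)
    have e5: "Suc j + (n - 1) - 1 = j + n - 1" by (simp add: m)
    show ?thesis unfolding e1 e2 e3 e4 IH e5 ..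
  qed
qed

lemma dec_take:
  "length ys \<le> Suc n \<Longrightarrow> dec Tc j s \<alpha>s ys = dec Tc j s (take n \<alpha>s) ys"
proof (induction Tc j s \<alpha>s ys arbitrary: n rule: dec.induct)
  case (1 Tc h s \<alpha> \<alpha>s x x' xs)
  then obtain m where "n = Suc m" by (cases n) auto
  then show ?case using 1 by simp
qed (auto simp: take_Cons')

lemma polT_take:
  "length ys \<le> h \<Longrightarrow> 1 \<le> h \<Longrightarrow>
   tasid_policy Tc sinit \<rho> \<alpha>s h ys = tasid_policy Tc sinit \<rho> (take (h - 1) \<alpha>s) h ys"
  unfolding tasid_policy_def by (subst dec_take[of ys "h - 1"]) auto

lemma roll_len: "(s, xs) \<in> set_pmf (roll init T q \<pi> k) \<Longrightarrow> length xs = k"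
  by (induction k arbitrary: s xs) auto

lemma roll_cong:
  "(\<And>j ys. 1 \<le> j \<Longrightarrow> j \<le> k \<Longrightarrow> length ys = j \<Longrightarrow> \<pi> j ys = \<pi>' j ys) \<Longrightarrow>
   roll init T q \<pi> k = roll init T q \<pi>' k"
proof (induction k)
  case 0
  then show ?case by simp
next
  case (Suc k)
  have IH: "roll init T q \<pi> k = roll init T q \<pi>' k" using Suc by auto
  show ?case
    unfolding roll.simps IH
  proof (intro bind_pmf_cong refl)
    fix z assume z: "z \<in> set_pmf (roll init T q \<pi>' k)"
    obtain s xs where zz: "z = (s, xs)" by (cases z)
    have "length xs = k" using z zz roll_len by metis
    then show "(case z of (s, xs) \<Rightarrow> q s \<bind> (\<lambda>x. map_pmf (\<lambda>s'. (s', xs @ [x])) (T (Suc k) s (\<pi> (Suc k) (xs @ [x]))))) =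
          (case z of (s, xs) \<Rightarrow> q s \<bind> (\<lambda>x. map_pmf (\<lambda>s'. (s', xs @ [x])) (T (Suc k) s (\<pi>' (Suc k) (xs @ [x])))))"
      using Suc.prems[of "Suc k"] zz by simp
  qed
qed

lemma sample_triple_cong:
  "(\<And>j ys. 1 \<le> j \<Longrightarrow> j \<le> h - 1 \<Longrightarrow> length ys = j \<Longrightarrow> \<pi> j ys = \<pi>' j ys) \<Longrightarrow>
   sample_triple A init T q \<pi> h = sample_triple A init T q \<pi>' h"
  unfolding sample_triple_def using roll_cong[of "h - 1" \<pi> \<pi>' init T q] by simp

locale TS =
  fixes H :: nat and S :: "'s set" and A :: "'a set" and sinit :: "'s"
    and Tc :: "nat \<Rightarrow> 's \<Rightarrow> 'a \<Rightarrow> 's" and Rc :: "nat \<Rightarrow> 's \<Rightarrow> 'a \<Rightarrow> real"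
    and init :: "'s pmf" and T :: "nat \<Rightarrow> 's \<Rightarrow> 'a \<Rightarrow> 's pmf" and R :: "nat \<Rightarrow> 's \<Rightarrow> 'a \<Rightarrow> real"
    and q :: "'s \<Rightarrow> 'x pmf" and \<eta> :: real and F :: "('x \<Rightarrow> 'x \<Rightarrow> 'a pmf) set"
    and \<xi> :: "nat \<Rightarrow> 's \<Rightarrow> 'a \<Rightarrow> 'a pmf"
    and \<rho> :: "nat \<Rightarrow> 's \<Rightarrow> 'a"
    and orcl :: "nat \<Rightarrow> ('x \<times> 'a \<times> 'x) list \<Rightarrow> ('x \<Rightarrow> 'x \<Rightarrow> 'a pmf)"
    and sel :: "('a \<Rightarrow> real) \<Rightarrow> 'a"
  assumes ds: "det_simulator H S A sinit Tc Rc"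
  and bm: "block_mdp H S A init T R q"
  and eta0: "0 \<le> \<eta>" and eta1: "\<eta> < 1/2"
  and xi: "\<forall>h\<in>{1..H}. \<forall>s\<in>S. \<forall>a\<in>A. set_pmf (\<xi> h s a) \<subseteq> A \<and> pmf (\<xi> h s a) a \<ge> 1 - \<eta> \<and>
          (\<forall>s'. pmf (T h s a) s' = (\<Sum>a'\<in>A. (if Tc h s a' = s' then 1 else 0) * pmf (\<xi> h s a) a'))"
  and finF: "finite F" and Fsupp: "\<forall>f\<in>F. \<forall>x x'. set_pmf (f x x') \<subseteq> A"
  and realz: "realizable H S A init T q F"
  and rho: "\<forall>h\<in>{1..H}. \<forall>s\<in>S. \<rho> h s \<in> A"
  and orc: "mle_oracle H F orcl"
  and sel: "argmax_selector A sel"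
begin

lemma finS: "finite S" and finA: "finite A" and Ane: "A \<noteq> {}" and sinitS: "sinit \<in> S"
  using ds unfolding det_simulator_def by auto

lemma TcS: "h \<in> {1..H} \<Longrightarrow> s \<in> S \<Longrightarrow> a \<in> A \<Longrightarrow> Tc h s a \<in> S"
  using ds unfolding det_simulator_def by auto

lemma initS: "set_pmf init \<subseteq> S" using bm unfolding block_mdp_def by auto

lemma TS: "h \<in> {1..H} \<Longrightarrow> s \<in> S \<Longrightarrow> a \<in> A \<Longrightarrow> set_pmf (T h s a) \<subseteq> S"
  using bm unfolding block_mdp_def by auto

lemma Rb: "h \<in> {1..H} \<Longrightarrow> s \<in> S \<Longrightarrow> a \<in> A \<Longrightarrow> 0 \<le> R h s a \<and> R h s a \<le> 1"
  using bm unfolding block_mdp_def by auto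

lemma dcd: assumes "s \<in> S" "x \<in> set_pmf (q s)" shows "decoder S q x = s"
proof -
  have disj: "\<forall>s\<in>S. \<forall>s'\<in>S. s \<noteq> s' \<longrightarrow> set_pmf (q s) \<inter> set_pmf (q s') = {}"
    using bm unfolding block_mdp_def by auto
  show ?thesis unfolding decoder_def
    by (rule the_equality) (use assms disj in auto)
qed

lemma cardA: "card A \<ge> 1" using finA Ane by (simp add: Suc_leI card_gt_0_iff)

lemma dec_S: "s \<in> S \<Longrightarrow> 1 \<le> j \<Longrightarrow> j + length \<alpha>s \<le> H \<Longrightarrow> aok A \<alpha>s \<Longrightarrow> dec Tc j s \<alpha>s xs \<in> S"
proof (induction \<alpha>s arbitrary: j s xs)
  case Nil
  then show ?case by (cases xs) auto
next
  case (Cons \<alpha> \<alpha>s)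
  show ?case
  proof (cases "\<exists>x x' xs'. xs = x # x' # xs'")
    case True
    then obtain x x' xs' where xs: "xs = x # x' # xs'" by auto
    have "Tc j s (\<alpha> x x') \<in> S" using Cons.prems TcS[of j s "\<alpha> x x'"] by (auto simp: aok_def)
    then show ?thesis using Cons.IH[of "Tc j s (\<alpha> x x')" "Suc j"] Cons.prems xs by (auto simp: aok_def)
  next
    case False
    then have "dec Tc j s (\<alpha> # \<alpha>s) xs = s"
    proof -
      have "xs = [] \<or> (\<exists>x. xs = [x])" using False by (metis list.exhaust)
      then show ?thesis by auto
    qed
    then show ?thesis using Cons.prems by simp
  qed
qed

lemma polT_A: "aok A \<alpha>s \<Longrightarrow> length \<alpha>s < H \<Longrightarrow> h \<in> {1..H} \<Longrightarrow> tasid_policy Tc sinit \<rho> \<alpha>s h ys \<in> A"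
  unfolding tasid_policy_def using rho dec_S[of sinit 1 \<alpha>s ys] sinitS by auto

lemma reach_S: "1 \<le> h \<Longrightarrow> h \<le> H \<Longrightarrow> s \<in> reach A init T h \<Longrightarrow> s \<in> S"
proof (induction h arbitrary: s)
  case 0
  then show ?case by simp
next
  case (Suc h)
  then show ?case
  proof (cases h)
    case 0
    then show ?thesis using Suc initS by auto
  next
    case (Suc h')
    from Suc.prems obtain s0 a where s0: "s0 \<in> reach A init T h" "a \<in> A" "s \<in> set_pmf (T h s0 a)"
      using Suc by auto
    have "s0 \<in> S" using Suc.IH[OF _ _ s0(1)] Suc Suc.prems by simp
    then show ?thesis using TS[of h s0 a] s0 Suc.prems \<open>h = Suc h'\<close> by auto
  qed
qed

lemma roll_reach:
  assumes pol: "\<forall>j\<in>{1..H}. \<forall>ys. \<pi> j ys \<in> A"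
  shows "(s, xs) \<in> set_pmf (roll init T q \<pi> k) \<Longrightarrow> k < H \<Longrightarrow> s \<in> reach A init T (Suc k)"
proof (induction k arbitrary: s xs)
  case 0
  then show ?case by auto
next
  case (Suc k)
  then obtain s0 xs0 x where "(s0, xs0) \<in> set_pmf (roll init T q \<pi> k)" "x \<in> set_pmf (q s0)"
    "s \<in> set_pmf (T (Suc k) s0 (\<pi> (Suc k) (xs0 @ [x])))" by auto
  moreover have "\<pi> (Suc k) (xs0 @ [x]) \<in> A" using pol Suc.prems(2) by simp
  moreover have "s0 \<in> reach A init T (Suc k)" using Suc.IH[OF calculation(1)] Suc.prems(2) by simp
  ultimately show ?case unfolding reach.simps by blast
qed

lemma roll_S:
  assumes pol: "\<forall>j\<in>{1..H}. \<forall>ys. \<pi> j ys \<in> A"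
  shows "(s, xs) \<in> set_pmf (roll init T q \<pi> k) \<Longrightarrow> k < H \<Longrightarrow> s \<in> S"
proof -
  assume a: "(s, xs) \<in> set_pmf (roll init T q \<pi> k)" "k < H"
  show "s \<in> S" using roll_reach[OF pol a] reach_S[of "Suc k" s] a(2) by simp
qed

end


lemma exp_lin_ineq:
  fixes f g hh :: "'b \<Rightarrow> real"
  assumes "\<And>y. y \<in> set_pmf p \<Longrightarrow> \<bar>f y\<bar> \<le> B" "\<And>y. y \<in> set_pmf p \<Longrightarrow> \<bar>g y\<bar> \<le> B"
    "\<And>y. y \<in> set_pmf p \<Longrightarrow> \<bar>hh y\<bar> \<le> B"
    "\<And>y. y \<in> set_pmf p \<Longrightarrow> g y - c * hh y \<le> f y"
  shows "measure_pmf.expectation p g - c * measure_pmf.expectation p hh \<le> measure_pmf.expectation p f"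
proof -
  have ig: "integrable (measure_pmf p) g" by (rule exp_int[OF assms(2)])
  have ih: "integrable (measure_pmf p) hh" by (rule exp_int[OF assms(3)])
  have if': "integrable (measure_pmf p) f" by (rule exp_int[OF assms(1)])
  have "measure_pmf.expectation p g - c * measure_pmf.expectation p hh =
        measure_pmf.expectation p (\<lambda>y. g y - c * hh y)"
    using ig ih by simp
  also have "\<dots> \<le> measure_pmf.expectation p f"
    by (rule integral_mono_AE) (auto simp: ig ih if' AE_measure_pmf_iff assms(4))
  finally show ?thesis .
qed

fun Pen :: "(nat \<Rightarrow> 's \<Rightarrow> 'a \<Rightarrow> 's pmf) \<Rightarrow> ('s \<Rightarrow> 'x pmf) \<Rightarrow> (nat \<Rightarrow> 'x list \<Rightarrow> 'a)
    \<Rightarrow> (nat \<Rightarrow> 'x \<Rightarrow> 'x \<Rightarrow> bool) \<Rightarrow> nat \<Rightarrow> nat \<Rightarrow> 'x list \<Rightarrow> 's \<Rightarrow> 'x \<Rightarrow> real" where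
  "Pen T q \<pi> mis 0 h xs s x = 0"
| "Pen T q \<pi> mis (Suc k) h xs s x =
     measure_pmf.expectation (T h s (\<pi> h (xs @ [x]))) (\<lambda>s'. measure_pmf.expectation (q s')
       (\<lambda>x'. (if mis h x x' then 1 else 0) + Pen T q \<pi> mis k (Suc h) (xs @ [x]) s' x'))"

lemma Pen_bnd: "0 \<le> Pen T q \<pi> mis k h xs s x \<and> Pen T q \<pi> mis k h xs s x \<le> real k"
proof (induction k arbitrary: h xs s x)
  case 0
  then show ?case by simp
next
  case (Suc k)
  have "0 \<le> measure_pmf.expectation (q s')
       (\<lambda>x'. (if mis h x x' then 1 else 0) + Pen T q \<pi> mis k (Suc h) (xs @ [x]) s' x') \<and>
        measure_pmf.expectation (q s')
       (\<lambda>x'. (if mis h x x' then 1 else 0) + Pen T q \<pi> mis k (Suc h) (xs @ [x]) s' x') \<le> real (Suc k)" for s'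
  proof (rule exp_bounds)
    fix y show "0 \<le> (if mis h x y then 1 else 0) + Pen T q \<pi> mis k (Suc h) (xs @ [x]) s' y \<and>
      (if mis h x y then 1 else 0) + Pen T q \<pi> mis k (Suc h) (xs @ [x]) s' y \<le> real (Suc k)"
      using Suc.IH[of "Suc h" "xs @ [x]" s' y] by auto
  qed
  then show ?case by (simp only: Pen.simps) (rule exp_bounds, blast)
qed

context TS begin

definition Wf :: "(nat \<Rightarrow> 'x list \<Rightarrow> 'a) \<Rightarrow> nat \<Rightarrow> nat \<Rightarrow> 'x list \<Rightarrow> 's \<Rightarrow> 'x \<Rightarrow> real" where
  "Wf \<pi> k h xs s x = R h s (\<pi> h (xs @ [x])) +
     measure_pmf.expectation (T h s (\<pi> h (xs @ [x]))) (\<lambda>s'. vtail T R q \<pi> k (Suc h) (xs @ [x]) s')"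

lemma vtail_Suc: "vtail T R q \<pi> (Suc k) h xs s = measure_pmf.expectation (q s) (Wf \<pi> k h xs s)"
  unfolding Wf_def[abs_def] by simp

definition Pol :: "(nat \<Rightarrow> 'x list \<Rightarrow> 'a) \<Rightarrow> bool" where
  "Pol \<pi> \<longleftrightarrow> (\<forall>h\<in>{1..H}. \<forall>s\<in>S. \<forall>x\<in>set_pmf (q s). \<forall>ys. \<pi> h (ys @ [x]) \<in> A)"

lemma vtail_bnd:
  assumes "Pol \<pi>"
  shows "s \<in> S \<Longrightarrow> 1 \<le> h \<Longrightarrow> h + k \<le> Suc H \<Longrightarrow> 0 \<le> vtail T R q \<pi> k h xs s \<and> vtail T R q \<pi> k h xs s \<le> real k"
proof (induction k arbitrary: h xs s)
  case 0
  then show ?case by simp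
next
  case (Suc k)
  have hH: "h \<in> {1..H}" using Suc.prems by auto
  show ?case unfolding vtail_Suc
  proof (rule exp_bounds)
    fix x assume x: "x \<in> set_pmf (q s)"
    have a: "\<pi> h (xs @ [x]) \<in> A" using assms Suc.prems x hH unfolding Pol_def by blast
    have r: "0 \<le> R h s (\<pi> h (xs @ [x])) \<and> R h s (\<pi> h (xs @ [x])) \<le> 1" using Rb[OF hH Suc.prems(1) a] .
    have e: "0 \<le> measure_pmf.expectation (T h s (\<pi> h (xs @ [x]))) (\<lambda>s'. vtail T R q \<pi> k (Suc h) (xs @ [x]) s') \<and>
      measure_pmf.expectation (T h s (\<pi> h (xs @ [x]))) (\<lambda>s'. vtail T R q \<pi> k (Suc h) (xs @ [x]) s') \<le> real k"
      by (rule exp_bounds) (use Suc.IH Suc.prems TS[OF hH Suc.prems(1) a] in auto)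
    show "0 \<le> Wf \<pi> k h xs s x \<and> Wf \<pi> k h xs s x \<le> real (Suc k)"
      unfolding Wf_def using r e by auto
  qed
qed

lemma Wf_bnd:
  assumes "Pol \<pi>" "s \<in> S" "x \<in> set_pmf (q s)" "1 \<le> h" "h + k \<le> H"
  shows "0 \<le> Wf \<pi> k h xs s x \<and> Wf \<pi> k h xs s x \<le> real (Suc k)"
proof -
  have hH: "h \<in> {1..H}" using assms by auto
  have a: "\<pi> h (xs @ [x]) \<in> A" using assms hH unfolding Pol_def by blast
  have r: "0 \<le> R h s (\<pi> h (xs @ [x])) \<and> R h s (\<pi> h (xs @ [x])) \<le> 1" using Rb[OF hH assms(2) a] .
  have e: "0 \<le> measure_pmf.expectation (T h s (\<pi> h (xs @ [x]))) (\<lambda>s'. vtail T R q \<pi> k (Suc h) (xs @ [x]) s') \<and>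
    measure_pmf.expectation (T h s (\<pi> h (xs @ [x]))) (\<lambda>s'. vtail T R q \<pi> k (Suc h) (xs @ [x]) s') \<le> real k"
    by (rule exp_bounds) (use vtail_bnd[OF assms(1)] assms TS[OF hH assms(2) a] in auto)
  show ?thesis unfolding Wf_def using r e by auto
qed

abbreviation "\<sigma> \<equiv> compose_decoder S q \<rho>"
abbreviation "polT \<alpha>s \<equiv> tasid_policy Tc sinit \<rho> \<alpha>s"

lemma Pol_sigma: "Pol \<sigma>"
  unfolding Pol_def compose_decoder_def using rho dcd by auto

lemma Pol_polT: "aok A \<alpha>s \<Longrightarrow> length \<alpha>s < H \<Longrightarrow> Pol (polT \<alpha>s)"
  unfolding Pol_def using polT_A by blast

definition mis :: "('x \<Rightarrow> 'x \<Rightarrow> 'a) list \<Rightarrow> nat \<Rightarrow> 'x \<Rightarrow> 'x \<Rightarrow> bool" where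
  "mis \<alpha>s h x x' \<longleftrightarrow> Tc h (decoder S q x) ((\<alpha>s ! (h - 1)) x x') \<noteq> decoder S q x'"

lemma W_lemma:
  assumes ok: "aok A \<alpha>s" and len: "length \<alpha>s = H - 1" and H1: "1 \<le> H"
  shows "s \<in> S \<Longrightarrow> x \<in> set_pmf (q s) \<Longrightarrow> 1 \<le> h \<Longrightarrow> h + k \<le> H \<Longrightarrow> length xs = h - 1 \<Longrightarrow>
    dec Tc 1 sinit \<alpha>s (xs @ [x]) = s \<Longrightarrow>
    Wf \<sigma> k h xs s x - real k * Pen T q (polT \<alpha>s) (mis \<alpha>s) k h xs s x \<le> Wf (polT \<alpha>s) k h xs s x"
proof (induction k arbitrary: h xs s x)
  case 0
  have "polT \<alpha>s h (xs @ [x]) = \<rho> h s" using 0 by (simp add: tasid_policy_def)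
  moreover have "\<sigma> h (xs @ [x]) = \<rho> h s" using 0 dcd by (simp add: compose_decoder_def)
  ultimately show ?case by (simp add: Wf_def)
next
  case (Suc k)
  let ?\<pi> = "polT \<alpha>s"
  have PP: "Pol ?\<pi>" using Pol_polT[OF ok] len H1 by simp
  have hH: "h \<in> {1..H}" using Suc.prems by auto
  have a1: "?\<pi> h (xs @ [x]) = \<rho> h s" using Suc.prems by (simp add: tasid_policy_def)
  have a2: "\<sigma> h (xs @ [x]) = \<rho> h s" using Suc.prems dcd by (simp add: compose_decoder_def)
  have aA: "\<rho> h s \<in> A" using rho hH Suc.prems by auto
  let ?P = "T h s (\<rho> h s)"
  have PS: "set_pmf ?P \<subseteq> S" using TS[OF hH Suc.prems(1) aA] .
  let ?G = "\<lambda>s' x'. (if mis \<alpha>s h x x' then 1 else 0) + Pen T q ?\<pi> (mis \<alpha>s) k (Suc h) (xs @ [x]) s' x'"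
  have pt: "Wf \<sigma> k (Suc h) (xs @ [x]) s' x' - real (Suc k) * ?G s' x' \<le> Wf ?\<pi> k (Suc h) (xs @ [x]) s' x'"
    if s': "s' \<in> set_pmf ?P" and x': "x' \<in> set_pmf (q s')" for s' x'
  proof -
    have s'S: "s' \<in> S" using s' PS by auto
    have bp: "0 \<le> Wf ?\<pi> k (Suc h) (xs @ [x]) s' x'"
      using Wf_bnd[OF PP s'S x', where h="Suc h" and k=k and xs="xs @ [x]"] Suc.prems by auto
    have bs: "Wf \<sigma> k (Suc h) (xs @ [x]) s' x' \<le> real (Suc k)"
      using Wf_bnd[OF Pol_sigma s'S x', where h="Suc h" and k=k and xs="xs @ [x]"] Suc.prems by auto
    have pn: "0 \<le> Pen T q ?\<pi> (mis \<alpha>s) k (Suc h) (xs @ [x]) s' x'"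
      using Pen_bnd[of T q ?\<pi> "mis \<alpha>s" k "Suc h" "xs @ [x]" s' x'] by simp
    show ?thesis
    proof (cases "mis \<alpha>s h x x'")
      case True
      define P where "P = Pen T q ?\<pi> (mis \<alpha>s) k (Suc h) (xs @ [x]) s' x'"
      have g: "?G s' x' = 1 + P" using True P_def by simp
      have "real (Suc k) * (1 + P) = real (Suc k) + real (Suc k) * P" by (simp add: algebra_simps)
      moreover have "0 \<le> real (Suc k) * P" using pn P_def by simp
      ultimately show ?thesis unfolding g using bp bs by linarith
    next
      case False
      have dx: "decoder S q x = s" using dcd Suc.prems by auto
      have dx': "decoder S q x' = s'" using dcd s'S x' by auto
      have "dec Tc 1 sinit \<alpha>s ((xs @ [x]) @ [x']) =
            Tc (1 + h - 1) (dec Tc 1 sinit \<alpha>s (xs @ [x])) ((\<alpha>s ! (h - 1)) (last (xs @ [x])) x')"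
        by (rule dec_snoc) (use Suc.prems len in auto)
      also have "\<dots> = s'" using False Suc.prems dx dx' unfolding mis_def by simp
      finally have dd: "dec Tc 1 sinit \<alpha>s ((xs @ [x]) @ [x']) = s'" .
      have IH: "Wf \<sigma> k (Suc h) (xs @ [x]) s' x' - real k * Pen T q ?\<pi> (mis \<alpha>s) k (Suc h) (xs @ [x]) s' x'
           \<le> Wf ?\<pi> k (Suc h) (xs @ [x]) s' x'"
        by (rule Suc.IH[OF s'S x' _ _ _ dd]) (use Suc.prems in auto)
      show ?thesis using IH pn False by (simp add: algebra_simps)
    qed
  qed
  have inner: "measure_pmf.expectation (q s') (Wf \<sigma> k (Suc h) (xs @ [x]) s')
      - real (Suc k) * measure_pmf.expectation (q s') (?G s')
      \<le> measure_pmf.expectation (q s') (Wf ?\<pi> k (Suc h) (xs @ [x]) s')"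
    if s': "s' \<in> set_pmf ?P" for s'
  proof (rule exp_lin_ineq[where B="real k + 2"])
    have s'S: "s' \<in> S" using s' PS by auto
    fix x' assume x': "x' \<in> set_pmf (q s')"
    show "\<bar>Wf ?\<pi> k (Suc h) (xs @ [x]) s' x'\<bar> \<le> real k + 2"
      using Wf_bnd[OF PP s'S x', where h="Suc h" and k=k and xs="xs @ [x]"] Suc.prems by auto
    show "\<bar>Wf \<sigma> k (Suc h) (xs @ [x]) s' x'\<bar> \<le> real k + 2"
      using Wf_bnd[OF Pol_sigma s'S x', where h="Suc h" and k=k and xs="xs @ [x]"] Suc.prems by auto
    show "\<bar>?G s' x'\<bar> \<le> real k + 2"
      using Pen_bnd[of T q ?\<pi> "mis \<alpha>s" k "Suc h" "xs @ [x]" s' x'] by auto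
    show "Wf \<sigma> k (Suc h) (xs @ [x]) s' x' - real (Suc k) * ?G s' x' \<le> Wf ?\<pi> k (Suc h) (xs @ [x]) s' x'"
      using pt[OF s' x'] .
  qed
  have outer: "measure_pmf.expectation ?P (\<lambda>s'. measure_pmf.expectation (q s') (Wf \<sigma> k (Suc h) (xs @ [x]) s'))
      - real (Suc k) * measure_pmf.expectation ?P (\<lambda>s'. measure_pmf.expectation (q s') (?G s'))
      \<le> measure_pmf.expectation ?P (\<lambda>s'. measure_pmf.expectation (q s') (Wf ?\<pi> k (Suc h) (xs @ [x]) s'))"
  proof (rule exp_lin_ineq[where B="real k + 2"])
    fix s' assume s': "s' \<in> set_pmf ?P"
    have s'S: "s' \<in> S" using s' PS by auto
    show "\<bar>measure_pmf.expectation (q s') (Wf ?\<pi> k (Suc h) (xs @ [x]) s')\<bar> \<le> real k + 2"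
      using exp_bounds[of "q s'" 0 "Wf ?\<pi> k (Suc h) (xs @ [x]) s'" "real (Suc k)"]
        Wf_bnd[OF PP s'S, where h="Suc h" and k=k and xs="xs @ [x]"] Suc.prems by auto
    show "\<bar>measure_pmf.expectation (q s') (Wf \<sigma> k (Suc h) (xs @ [x]) s')\<bar> \<le> real k + 2"
      using exp_bounds[of "q s'" 0 "Wf \<sigma> k (Suc h) (xs @ [x]) s'" "real (Suc k)"]
        Wf_bnd[OF Pol_sigma s'S, where h="Suc h" and k=k and xs="xs @ [x]"] Suc.prems by auto
    have "0 \<le> measure_pmf.expectation (q s') (?G s') \<and> measure_pmf.expectation (q s') (?G s') \<le> real (Suc k)"
    proof (rule exp_bounds)
      fix y show "0 \<le> ?G s' y \<and> ?G s' y \<le> real (Suc k)"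
        using Pen_bnd[of T q ?\<pi> "mis \<alpha>s" k "Suc h" "xs @ [x]" s' y] by auto
    qed
    then show "\<bar>measure_pmf.expectation (q s') (?G s')\<bar> \<le> real k + 2" by auto
    show "measure_pmf.expectation (q s') (Wf \<sigma> k (Suc h) (xs @ [x]) s') - real (Suc k) * measure_pmf.expectation (q s') (?G s')
      \<le> measure_pmf.expectation (q s') (Wf ?\<pi> k (Suc h) (xs @ [x]) s')"
      using inner[OF s'] .
  qed
  have e1: "Wf ?\<pi> (Suc k) h xs s x = R h s (\<rho> h s) + measure_pmf.expectation ?P (\<lambda>s'. measure_pmf.expectation (q s') (Wf ?\<pi> k (Suc h) (xs @ [x]) s'))"
    unfolding Wf_def[of _ "Suc k"] vtail_Suc a1 ..
  have e2: "Wf \<sigma> (Suc k) h xs s x = R h s (\<rho> h s) + measure_pmf.expectation ?P (\<lambda>s'. measure_pmf.expectation (q s') (Wf \<sigma> k (Suc h) (xs @ [x]) s'))"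
    unfolding Wf_def[of _ "Suc k"] vtail_Suc a2 ..
  have e3: "Pen T q ?\<pi> (mis \<alpha>s) (Suc k) h xs s x = measure_pmf.expectation ?P (\<lambda>s'. measure_pmf.expectation (q s') (?G s'))"
    unfolding Pen.simps a1 ..
  show ?case unfolding e1 e2 e3 using outer by simp
qed

end


lemma prob_exp: "measure_pmf.prob p E = measure_pmf.expectation p (\<lambda>y. if y \<in> E then 1 else 0)"
proof -
  have "(\<lambda>y. if y \<in> E then 1 else 0 :: real) = indicator E" by (auto simp: indicator_def)
  then show ?thesis by simp
qed

lemma roll_step_exp:
  fixes G :: "'s \<times> 'x list \<Rightarrow> real"
  assumes "\<And>z. \<bar>G z\<bar> \<le> B"
  shows "measure_pmf.expectation (roll init T q \<pi> (Suc k)) G =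
    measure_pmf.expectation (roll init T q \<pi> k) (\<lambda>(s, xs). measure_pmf.expectation (q s) (\<lambda>x.
       measure_pmf.expectation (T (Suc k) s (\<pi> (Suc k) (xs @ [x]))) (\<lambda>s'. G (s', xs @ [x]))))"
  unfolding roll.simps
  apply (subst exp_bind[where B=B], rule assms)
  apply (rule Bochner_Integration.integral_cong[OF refl])
  apply (clarsimp split: prod.splits)
  apply (subst exp_bind[where B=B], rule assms)
  apply simp
  done

definition exec :: "'s pmf \<Rightarrow> (nat \<Rightarrow> 's \<Rightarrow> 'a \<Rightarrow> 's pmf) \<Rightarrow> ('s \<Rightarrow> 'x pmf) \<Rightarrow> (nat \<Rightarrow> 'x list \<Rightarrow> 'a)
    \<Rightarrow> (nat \<Rightarrow> 'x \<Rightarrow> 'x \<Rightarrow> bool) \<Rightarrow> nat \<Rightarrow> real" where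
  "exec init T q \<pi> mis h = measure_pmf.expectation (roll init T q \<pi> (h - 1)) (\<lambda>(s, xs).
     measure_pmf.expectation (q s) (\<lambda>x. measure_pmf.expectation (T h s (\<pi> h (xs @ [x])))
       (\<lambda>s'. measure_pmf.expectation (q s') (\<lambda>x'. if mis h x x' then 1 else 0))))"

lemma exp_add_glob:
  fixes f g :: "'b \<Rightarrow> real"
  assumes "\<And>y. \<bar>f y\<bar> \<le> B" "\<And>y. \<bar>g y\<bar> \<le> B"
  shows "measure_pmf.expectation p (\<lambda>y. f y + g y) = measure_pmf.expectation p f + measure_pmf.expectation p g"
  by (rule exp_add[where B=B]) (use assms in auto)

lemma exp_abs_bnd:
  fixes f :: "'b \<Rightarrow> real"
  assumes "\<And>y. \<bar>f y\<bar> \<le> B"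
  shows "\<bar>measure_pmf.expectation p f\<bar> \<le> B"
proof -
  have "- B \<le> measure_pmf.expectation p f \<and> measure_pmf.expectation p f \<le> B"
  proof (rule exp_bounds)
    fix y show "- B \<le> f y \<and> f y \<le> B" using assms[of y] by (simp add: abs_le_iff)
  qed
  then show ?thesis by auto
qed

lemma Pen_abs: "\<bar>Pen T q \<pi> mis k h xs s x\<bar> \<le> real k"
  using Pen_bnd[of T q \<pi> mis k h xs s x] by auto

lemma Pen_abs1: "\<bar>Pen T q \<pi> mis k h xs s x\<bar> \<le> real k + 1"
  using Pen_abs[of T q \<pi> mis k h xs s x] by simp

lemma unroll:
  "1 \<le> j \<Longrightarrow> measure_pmf.expectation (roll init T q \<pi> (j - 1)) (\<lambda>(s, xs).
      measure_pmf.expectation (q s) (\<lambda>x. Pen T q \<pi> mis k j xs s x))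
   = (\<Sum>i<k. exec init T q \<pi> mis (j + i))"
proof (induction k arbitrary: j)
  case 0
  then show ?case by simp
next
  case (Suc k)
  define a where "a s xs x = measure_pmf.expectation (T j s (\<pi> j (xs @ [x])))
       (\<lambda>s'. measure_pmf.expectation (q s') (\<lambda>x'. if mis j x x' then 1 else 0 :: real))" for s xs x
  define b where "b s xs x = measure_pmf.expectation (T j s (\<pi> j (xs @ [x])))
       (\<lambda>s'. measure_pmf.expectation (q s') (\<lambda>x'. Pen T q \<pi> mis k (Suc j) (xs @ [x]) s' x'))" for s xs x
  have ab: "\<bar>a s xs x\<bar> \<le> real k + 1" "\<bar>b s xs x\<bar> \<le> real k + 1" for s xs x
    unfolding a_def b_def
    by (rule exp_abs_bnd, rule exp_abs_bnd, simp add: Pen_abs1)+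
  have P: "Pen T q \<pi> mis (Suc k) j xs s x = a s xs x + b s xs x" for s xs x
  proof -
    have "Pen T q \<pi> mis (Suc k) j xs s x = measure_pmf.expectation (T j s (\<pi> j (xs @ [x])))
       (\<lambda>s'. measure_pmf.expectation (q s') (\<lambda>x'. if mis j x x' then 1 else 0) +
             measure_pmf.expectation (q s') (\<lambda>x'. Pen T q \<pi> mis k (Suc j) (xs @ [x]) s' x'))"
      unfolding Pen.simps
      by (rule Bochner_Integration.integral_cong[OF refl], rule exp_add_glob[where B="real k + 1"])
         (auto intro!: exp_abs_bnd simp: Pen_abs1)
    also have "\<dots> = a s xs x + b s xs x" unfolding a_def b_def
      by (rule exp_add_glob[where B="real k + 1"]; rule exp_abs_bnd) (auto intro!: exp_abs_bnd simp: Pen_abs1)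
    finally show ?thesis .
  qed
  have L: "measure_pmf.expectation (roll init T q \<pi> (j - 1)) (\<lambda>(s, xs).
      measure_pmf.expectation (q s) (\<lambda>x. Pen T q \<pi> mis (Suc k) j xs s x))
    = measure_pmf.expectation (roll init T q \<pi> (j - 1)) (\<lambda>(s, xs). measure_pmf.expectation (q s) (a s xs))
    + measure_pmf.expectation (roll init T q \<pi> (j - 1)) (\<lambda>(s, xs). measure_pmf.expectation (q s) (b s xs))"
  proof -
    have "measure_pmf.expectation (roll init T q \<pi> (j - 1)) (\<lambda>(s, xs).
      measure_pmf.expectation (q s) (\<lambda>x. Pen T q \<pi> mis (Suc k) j xs s x)) =
      measure_pmf.expectation (roll init T q \<pi> (j - 1)) (\<lambda>z. (case z of (s, xs) \<Rightarrow> measure_pmf.expectation (q s) (a s xs))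
        + (case z of (s, xs) \<Rightarrow> measure_pmf.expectation (q s) (b s xs)))"
      unfolding P
      by (rule Bochner_Integration.integral_cong[OF refl], clarsimp split: prod.splits,
          rule exp_add_glob[where B="real k + 1"]) (use ab in auto)
    also have "\<dots> = measure_pmf.expectation (roll init T q \<pi> (j - 1)) (\<lambda>(s, xs). measure_pmf.expectation (q s) (a s xs))
    + measure_pmf.expectation (roll init T q \<pi> (j - 1)) (\<lambda>(s, xs). measure_pmf.expectation (q s) (b s xs))"
      by (rule exp_add_glob[where B="real k + 1"]) (auto split: prod.splits intro!: exp_abs_bnd simp: ab)
    finally show ?thesis .
  qed
  have La: "measure_pmf.expectation (roll init T q \<pi> (j - 1)) (\<lambda>(s, xs). measure_pmf.expectation (q s) (a s xs))
     = exec init T q \<pi> mis j"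
    unfolding exec_def a_def[abs_def] ..
  have jj: "Suc (j - 1) = j" using Suc.prems by simp
  have Lb: "measure_pmf.expectation (roll init T q \<pi> (j - 1)) (\<lambda>(s, xs). measure_pmf.expectation (q s) (b s xs))
     = measure_pmf.expectation (roll init T q \<pi> (Suc j - 1)) (\<lambda>(s, xs).
      measure_pmf.expectation (q s) (\<lambda>x. Pen T q \<pi> mis k (Suc j) xs s x))"
  proof -
    have "measure_pmf.expectation (roll init T q \<pi> (Suc (j - 1))) (\<lambda>(s, xs).
      measure_pmf.expectation (q s) (\<lambda>x. Pen T q \<pi> mis k (Suc j) xs s x)) =
      measure_pmf.expectation (roll init T q \<pi> (j - 1)) (\<lambda>(s, xs). measure_pmf.expectation (q s) (\<lambda>x.
       measure_pmf.expectation (T (Suc (j - 1)) s (\<pi> (Suc (j - 1)) (xs @ [x]))) (\<lambda>s'.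
         measure_pmf.expectation (q s') (\<lambda>x'. Pen T q \<pi> mis k (Suc j) (xs @ [x]) s' x'))))"
    proof -
      have bnd: "\<bar>(\<lambda>(s, xs). measure_pmf.expectation (q s) (\<lambda>x. Pen T q \<pi> mis k (Suc j) xs s x)) z\<bar> \<le> real k + 1" for z
        by (auto split: prod.splits intro!: exp_abs_bnd simp: Pen_abs1)
      show ?thesis using roll_step_exp[OF bnd, of init T q \<pi> "j - 1"] by simp
    qed
    then show ?thesis unfolding b_def[abs_def] jj by simp
  qed
  have IH: "measure_pmf.expectation (roll init T q \<pi> (Suc j - 1)) (\<lambda>(s, xs).
      measure_pmf.expectation (q s) (\<lambda>x. Pen T q \<pi> mis k (Suc j) xs s x))
     = (\<Sum>i<k. exec init T q \<pi> mis (Suc j + i))"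
    using Suc.IH[of "Suc j"] by simp
  show ?case unfolding L La Lb IH sum.lessThan_Suc_shift by simp
qed


context TS begin

lemma V_lemma:
  assumes ok: "aok A \<alpha>s" and len: "length \<alpha>s = H - 1" and H1: "1 \<le> H"
  shows "policy_value H init T R q \<sigma> - real H * measure_pmf.prob init {s. s \<noteq> sinit}
     - real (H - 1) * (\<Sum>i<H - 1. exec init T q (polT \<alpha>s) (mis \<alpha>s) (1 + i))
     \<le> policy_value H init T R q (polT \<alpha>s)"
proof -
  obtain K where HK: "H = Suc K" using H1 by (cases H) auto
  let ?\<pi> = "polT \<alpha>s"
  have PP: "Pol ?\<pi>" using Pol_polT[OF ok] len H1 by simp
  let ?ind = "\<lambda>s. if s \<noteq> sinit then 1 else 0 :: real"
  let ?Pn = "\<lambda>s x. Pen T q ?\<pi> (mis \<alpha>s) K 1 [] s x"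
  have pv: "policy_value H init T R q \<pi>' = measure_pmf.expectation init (\<lambda>s. measure_pmf.expectation (q s) (Wf \<pi>' K 1 [] s))" for \<pi>'
    unfolding policy_value_def HK vtail_Suc ..
  have pt: "Wf \<sigma> K 1 [] s x - real H * ?ind s - real K * ?Pn s x \<le> Wf ?\<pi> K 1 [] s x"
    if s: "s \<in> set_pmf init" and x: "x \<in> set_pmf (q s)" for s x
  proof -
    have sS: "s \<in> S" using s initS by auto
    have b1: "0 \<le> Wf ?\<pi> K 1 [] s x" using Wf_bnd[OF PP sS x, of 1 K "[]"] HK by simp
    have b2: "Wf \<sigma> K 1 [] s x \<le> real H" using Wf_bnd[OF Pol_sigma sS x, of 1 K "[]"] HK by simp
    have b3: "0 \<le> real K * ?Pn s x" using Pen_bnd[of T q ?\<pi> "mis \<alpha>s" K 1 "[]" s x] by simp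
    show ?thesis
    proof (cases "s = sinit")
      case True
      have dd: "dec Tc 1 sinit \<alpha>s ([] @ [x]) = s" using True by simp
      have "Wf \<sigma> K 1 [] s x - real K * ?Pn s x \<le> Wf ?\<pi> K 1 [] s x"
        by (rule W_lemma[OF ok len H1 sS x _ _ _ dd]) (use HK in auto)
      then show ?thesis using True by simp
    next
      case False
      then show ?thesis using b1 b2 b3 by simp
    qed
  qed
  have inner: "measure_pmf.expectation (q s) (\<lambda>x. Wf \<sigma> K 1 [] s x - real H * ?ind s)
      - real K * measure_pmf.expectation (q s) (?Pn s) \<le> measure_pmf.expectation (q s) (Wf ?\<pi> K 1 [] s)"
    if s: "s \<in> set_pmf init" for s
  proof (rule exp_lin_ineq[where B="2 * real H + 2"])
    have sS: "s \<in> S" using s initS by auto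
    fix x assume x: "x \<in> set_pmf (q s)"
    show "\<bar>Wf ?\<pi> K 1 [] s x\<bar> \<le> 2 * real H + 2" using Wf_bnd[OF PP sS x, of 1 K "[]"] HK by simp
    show "\<bar>Wf \<sigma> K 1 [] s x - real H * ?ind s\<bar> \<le> 2 * real H + 2"
      using Wf_bnd[OF Pol_sigma sS x, of 1 K "[]"] HK by (cases "s = sinit") auto
    show "\<bar>?Pn s x\<bar> \<le> 2 * real H + 2" using Pen_abs[of T q ?\<pi> "mis \<alpha>s" K 1 "[]" s x] HK by simp
    show "Wf \<sigma> K 1 [] s x - real H * ?ind s - real K * ?Pn s x \<le> Wf ?\<pi> K 1 [] s x" using pt[OF s x] .
  qed
  have inner2: "measure_pmf.expectation (q s) (\<lambda>x. Wf \<sigma> K 1 [] s x - real H * ?ind s)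
      = measure_pmf.expectation (q s) (Wf \<sigma> K 1 [] s) - real H * ?ind s"
    if s: "s \<in> set_pmf init" for s
  proof -
    have sS: "s \<in> S" using s initS by auto
    have "measure_pmf.expectation (q s) (\<lambda>x. Wf \<sigma> K 1 [] s x - real H * ?ind s)
      = measure_pmf.expectation (q s) (Wf \<sigma> K 1 [] s) - measure_pmf.expectation (q s) (\<lambda>x. real H * ?ind s)"
      by (rule exp_diff[where B="real H"]) (use Wf_bnd[OF Pol_sigma sS, of _ 1 K "[]"] HK in auto)
    then show ?thesis by simp
  qed
  let ?g = "\<lambda>s. measure_pmf.expectation (q s) (Wf \<sigma> K 1 [] s) - real H * ?ind s"
  let ?h = "\<lambda>s. measure_pmf.expectation (q s) (?Pn s)"
  let ?f = "\<lambda>s. measure_pmf.expectation (q s) (Wf ?\<pi> K 1 [] s)"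
  have outer: "measure_pmf.expectation init ?g - real K * measure_pmf.expectation init ?h
     \<le> measure_pmf.expectation init ?f"
  proof (rule exp_lin_ineq[where B="2 * real H + 2"])
    fix s assume s: "s \<in> set_pmf init"
    have sS: "s \<in> S" using s initS by auto
    have e1: "0 \<le> ?f s \<and> ?f s \<le> real H"
      by (rule exp_bounds) (use Wf_bnd[OF PP sS, of _ 1 K "[]"] HK in auto)
    have e2: "0 \<le> measure_pmf.expectation (q s) (Wf \<sigma> K 1 [] s) \<and> measure_pmf.expectation (q s) (Wf \<sigma> K 1 [] s) \<le> real H"
      by (rule exp_bounds) (use Wf_bnd[OF Pol_sigma sS, of _ 1 K "[]"] HK in auto)
    have e3: "\<bar>?h s\<bar> \<le> real K" by (rule exp_abs_bnd) (rule Pen_abs)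
    show "\<bar>?f s\<bar> \<le> 2 * real H + 2" using e1 by simp
    show "\<bar>?g s\<bar> \<le> 2 * real H + 2" using e2 by (cases "s = sinit") auto
    show "\<bar>?h s\<bar> \<le> 2 * real H + 2" using e3 HK by simp
    show "?g s - real K * ?h s \<le> ?f s" using inner[OF s] inner2[OF s] by simp
  qed
  have g_eq: "measure_pmf.expectation init ?g = policy_value H init T R q \<sigma> - real H * measure_pmf.prob init {s. s \<noteq> sinit}"
  proof -
    have "measure_pmf.expectation init ?g = measure_pmf.expectation init (\<lambda>s. measure_pmf.expectation (q s) (Wf \<sigma> K 1 [] s))
       - measure_pmf.expectation init (\<lambda>s. real H * ?ind s)"
    proof (rule exp_diff[where B="real H"])
      fix s assume s: "s \<in> set_pmf init"
      have sS: "s \<in> S" using s initS by auto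
      have e2: "0 \<le> measure_pmf.expectation (q s) (Wf \<sigma> K 1 [] s) \<and> measure_pmf.expectation (q s) (Wf \<sigma> K 1 [] s) \<le> real H"
        by (rule exp_bounds) (use Wf_bnd[OF Pol_sigma sS, of _ 1 K "[]"] HK in auto)
      then show "\<bar>measure_pmf.expectation (q s) (Wf \<sigma> K 1 [] s)\<bar> \<le> real H" by simp
      show "\<bar>real H * ?ind s\<bar> \<le> real H" by simp
    qed
    moreover have "measure_pmf.expectation init (\<lambda>s. real H * ?ind s) = real H * measure_pmf.prob init {s. s \<noteq> sinit}"
      by (simp add: prob_exp)
    ultimately show ?thesis by (simp add: pv)
  qed
  have h_eq: "measure_pmf.expectation init ?h = (\<Sum>i<H - 1. exec init T q ?\<pi> (mis \<alpha>s) (1 + i))"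
    using unroll[of 1 init T q ?\<pi> "mis \<alpha>s" K] HK by simp
  show ?thesis using outer g_eq h_eq pv[of ?\<pi>] HK by simp
qed

end


lemma exp_bind_glob:
  fixes f :: "'b \<Rightarrow> real"
  assumes "\<And>y. \<bar>f y\<bar> \<le> B"
  shows "measure_pmf.expectation (bind_pmf M N) f = measure_pmf.expectation M (\<lambda>x. measure_pmf.expectation (N x) f)"
  by (rule exp_bind[where B=B]) (use assms in auto)

lemma sample_exp:
  fixes G :: "'x \<times> 'a \<times> 'x \<Rightarrow> real"
  assumes "\<And>y. \<bar>G y\<bar> \<le> B"
  shows "measure_pmf.expectation (sample_triple A init T q \<pi> h) G =
    measure_pmf.expectation (roll init T q \<pi> (h - 1)) (\<lambda>(s, xs). measure_pmf.expectation (q s) (\<lambda>x.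
      measure_pmf.expectation (pmf_of_set A) (\<lambda>a. measure_pmf.expectation (T h s a) (\<lambda>s'.
        measure_pmf.expectation (q s') (\<lambda>x'. G (x, a, x'))))))"
  unfolding sample_triple_def
  apply (subst exp_bind_glob[where B=B, OF assms])
  apply (rule Bochner_Integration.integral_cong[OF refl])
  apply (clarsimp split: prod.splits)
  apply (simp add: exp_bind_glob[where B=B, OF assms])
  done

context TS begin

definition md :: "(nat \<Rightarrow> 'x list \<Rightarrow> 'a) \<Rightarrow> nat \<Rightarrow> ('x \<Rightarrow> 'x \<Rightarrow> 'a) \<Rightarrow> real" where
  "md \<pi> h \<alpha> = measure_pmf.prob (sample_triple A init T q \<pi> h)
     {(x, a, x'). Tc h (decoder S q x) (\<alpha> x x') \<noteq> decoder S q x'}"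

lemma exec_bound:
  assumes pol: "\<forall>j\<in>{1..H}. \<forall>ys. \<pi> j ys \<in> A" and h: "1 \<le> h" "h \<le> H"
  shows "exec init T q \<pi> (mis \<alpha>s) h \<le> real (card A) * md \<pi> h (\<alpha>s ! (h - 1))"
proof -
  let ?ind = "\<lambda>x x'. if mis \<alpha>s h x x' then 1 else 0 :: real"
  define M where "M s x a = measure_pmf.expectation (T h s a) (\<lambda>s'. measure_pmf.expectation (q s') (?ind x))" for s x a
  have M01: "0 \<le> M s x a \<and> M s x a \<le> 1" for s x a
    unfolding M_def by (rule exp_bounds, rule exp_bounds) auto
  have cA: "real (card A) > 0" using cardA by simp
  have Mb: "\<bar>M s x a\<bar> \<le> real (card A)" for s x a using M01[of s x a] cardA by auto
  have md_eq: "md \<pi> h (\<alpha>s ! (h - 1)) = measure_pmf.expectation (roll init T q \<pi> (h - 1)) (\<lambda>(s, xs).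
      measure_pmf.expectation (q s) (\<lambda>x. (\<Sum>a\<in>A. M s x a) / real (card A)))"
  proof -
    have "md \<pi> h (\<alpha>s ! (h - 1)) = measure_pmf.expectation (sample_triple A init T q \<pi> h)
      (\<lambda>(x, a, x'). ?ind x x')"
      unfolding md_def prob_exp mis_def
      by (rule Bochner_Integration.integral_cong[OF refl]) auto
    also have "\<dots> = measure_pmf.expectation (roll init T q \<pi> (h - 1)) (\<lambda>(s, xs). measure_pmf.expectation (q s) (\<lambda>x.
      measure_pmf.expectation (pmf_of_set A) (\<lambda>a. M s x a)))"
      unfolding M_def by (subst sample_exp[where B=1]) auto
    also have "\<dots> = measure_pmf.expectation (roll init T q \<pi> (h - 1)) (\<lambda>(s, xs).
      measure_pmf.expectation (q s) (\<lambda>x. (\<Sum>a\<in>A. M s x a) / real (card A)))"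
      by (simp add: integral_pmf_of_set[OF Ane finA])
    finally show ?thesis .
  qed
  have ex_eq: "exec init T q \<pi> (mis \<alpha>s) h = measure_pmf.expectation (roll init T q \<pi> (h - 1)) (\<lambda>(s, xs).
      measure_pmf.expectation (q s) (\<lambda>x. M s x (\<pi> h (xs @ [x]))))"
    unfolding exec_def M_def ..
  have "exec init T q \<pi> (mis \<alpha>s) h \<le> measure_pmf.expectation (roll init T q \<pi> (h - 1)) (\<lambda>(s, xs).
      measure_pmf.expectation (q s) (\<lambda>x. real (card A) * ((\<Sum>a\<in>A. M s x a) / real (card A))))"
    unfolding ex_eq
  proof (rule exp_mono[where B="real (card A)"])
    fix z
    show "\<bar>(case z of (s, xs) \<Rightarrow> measure_pmf.expectation (q s) (\<lambda>x. M s x (\<pi> h (xs @ [x]))))\<bar> \<le> real (card A)"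
      by (auto split: prod.splits intro!: exp_abs_bnd simp: Mb)
    show "\<bar>(case z of (s, xs) \<Rightarrow> measure_pmf.expectation (q s) (\<lambda>x. real (card A) * ((\<Sum>a\<in>A. M s x a) / real (card A))))\<bar> \<le> real (card A)"
    proof -
      have "\<bar>real (card A) * ((\<Sum>a\<in>A. M s x a) / real (card A))\<bar> \<le> real (card A)" for s x
      proof -
        have "real (card A) * ((\<Sum>a\<in>A. M s x a) / real (card A)) = (\<Sum>a\<in>A. M s x a)" using cA by simp
        moreover have "0 \<le> (\<Sum>a\<in>A. M s x a)" by (rule sum_nonneg) (use M01 in auto)
        moreover have "(\<Sum>a\<in>A. M s x a) \<le> (\<Sum>a\<in>A. 1)" by (rule sum_mono) (use M01 in auto)
        ultimately show ?thesis by simp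
      qed
      then show ?thesis by (auto split: prod.splits intro!: exp_abs_bnd)
    qed
    assume z: "z \<in> set_pmf (roll init T q \<pi> (h - 1))"
    obtain s xs where zz: "z = (s, xs)" by (cases z)
    have "measure_pmf.expectation (q s) (\<lambda>x. M s x (\<pi> h (xs @ [x]))) \<le>
        measure_pmf.expectation (q s) (\<lambda>x. real (card A) * ((\<Sum>a\<in>A. M s x a) / real (card A)))"
    proof (rule exp_mono[where B="real (card A)"])
      fix x
      have a: "\<pi> h (xs @ [x]) \<in> A" using pol h by auto
      have s1: "M s x (\<pi> h (xs @ [x])) \<le> (\<Sum>a\<in>A. M s x a)"
        by (rule member_le_sum[OF a]) (use M01 finA in auto)
      have s2: "real (card A) * ((\<Sum>a\<in>A. M s x a) / real (card A)) = (\<Sum>a\<in>A. M s x a)" using cA by simp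
      have s3: "0 \<le> (\<Sum>a\<in>A. M s x a)" by (rule sum_nonneg) (use M01 in auto)
      have s4: "(\<Sum>a\<in>A. M s x a) \<le> (\<Sum>a\<in>A. 1)" by (rule sum_mono) (use M01 in auto)
      show "\<bar>M s x (\<pi> h (xs @ [x]))\<bar> \<le> real (card A)" using M01[of s x "\<pi> h (xs @ [x])"] cardA by auto
      show "\<bar>real (card A) * ((\<Sum>a\<in>A. M s x a) / real (card A))\<bar> \<le> real (card A)" using s2 s3 s4 by simp
      show "M s x (\<pi> h (xs @ [x])) \<le> real (card A) * ((\<Sum>a\<in>A. M s x a) / real (card A))" using s1 s2 by simp
    qed
    then show "(case z of (s, xs) \<Rightarrow> measure_pmf.expectation (q s) (\<lambda>x. M s x (\<pi> h (xs @ [x]))))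
      \<le> (case z of (s, xs) \<Rightarrow> measure_pmf.expectation (q s) (\<lambda>x. real (card A) * ((\<Sum>a\<in>A. M s x a) / real (card A))))"
      using zz by simp
  qed
  also have "\<dots> = real (card A) * md \<pi> h (\<alpha>s ! (h - 1))"
    unfolding md_eq by (simp add: case_prod_beta')
  finally show ?thesis .
qed

end


lemma sqrt_ineq_pair:
  fixes p r u v :: real
  assumes "v \<le> u" "p \<le> r"
  shows "(r - p)^2 \<le> 2 * ((p - u)^2 + (r - v)^2)"
proof -
  define X where "X = r - v"
  define W where "W = p - u"
  have a: "0 \<le> r - p" using assms by simp
  have b: "r - p \<le> X - W" using assms unfolding X_def W_def by simp
  have "(r - p)^2 \<le> (X - W)^2" using a b by (intro power_mono) auto
  moreover have "2 * (W^2 + X^2) - (X - W)^2 = (X + W)^2" by (simp add: power2_eq_square algebra_simps)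
  moreover have "0 \<le> (X + W)^2" by simp
  ultimately have "(r - p)^2 \<le> 2 * (W^2 + X^2)" by linarith
  then show ?thesis unfolding X_def W_def .
qed

lemma bc_identity:
  fixes f g :: "'a \<Rightarrow> real"
  assumes "finite A" "\<forall>a\<in>A. 0 \<le> f a" "\<forall>a\<in>A. 0 \<le> g a" "sum f A = 1" "sum g A = 1"
  shows "(\<Sum>a\<in>A. sqrt (f a * g a)) = 1 - (\<Sum>a\<in>A. (sqrt (f a) - sqrt (g a))^2) / 2"
proof -
  have "(sqrt (f a) - sqrt (g a))^2 = f a + g a - 2 * sqrt (f a * g a)" if "a \<in> A" for a
    using assms that by (simp add: power2_eq_square algebra_simps real_sqrt_mult)
  then have "(\<Sum>a\<in>A. (sqrt (f a) - sqrt (g a))^2) = (\<Sum>a\<in>A. f a + g a - 2 * sqrt (f a * g a))"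
    by (rule sum.cong[OF refl])
  also have "\<dots> = 2 - 2 * (\<Sum>a\<in>A. sqrt (f a * g a))"
    using assms by (simp add: sum.distrib sum_subtractf sum_distrib_left)
  finally show ?thesis by linarith
qed

lemma bc_le1:
  fixes f g :: "'a \<Rightarrow> real"
  assumes "finite A" "\<forall>a\<in>A. 0 \<le> f a" "\<forall>a\<in>A. 0 \<le> g a" "sum f A = 1" "sum g A = 1"
  shows "(\<Sum>a\<in>A. sqrt (f a * g a)) \<le> 1"
proof -
  have "0 \<le> (\<Sum>a\<in>A. (sqrt (f a) - sqrt (g a))^2)" by (rule sum_nonneg) auto
  then show ?thesis using bc_identity[OF assms] by simp
qed

lemma lin4: "(a::real) \<le> X \<Longrightarrow> a = e / 4 \<Longrightarrow> X \<le> 2 * Y \<Longrightarrow> Y \<le> Z \<Longrightarrow> e / 8 \<le> Z"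
  by linarith

lemma lin5: "(x::real) = 1 - S / 2 \<Longrightarrow> e / 8 \<le> S \<Longrightarrow> x \<le> 1 - e / 16"
  by linarith

lemma bc_gap:
  fixes f g :: "'a \<Rightarrow> real"
  assumes fin: "finite A" and f0: "\<forall>a\<in>A. 0 \<le> f a" and g0: "\<forall>a\<in>A. 0 \<le> g a"
    and sf: "sum f A = 1" and sg: "sum g A = 1"
    and bc: "b \<in> A" "c \<in> A" "b \<noteq> c" and gbc: "g c \<le> g b" and d: "d \<le> f c - f b" "0 \<le> d"
  shows "(\<Sum>a\<in>A. sqrt (f a * g a)) \<le> 1 - d^2 / 16"
proof -
  let ?D = "\<lambda>a. (sqrt (f a) - sqrt (g a))^2"
  have fle1: "f a \<le> 1" if "a \<in> A" for a
  proof -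
    have "f a \<le> sum f A" by (rule member_le_sum[OF that]) (use f0 fin in auto)
    then show ?thesis using sf by simp
  qed
  have "?D b + ?D c = sum ?D {b, c}" using bc by simp
  also have "\<dots> \<le> sum ?D A" by (rule sum_mono2[OF fin]) (use bc in auto)
  finally have s2: "?D b + ?D c \<le> sum ?D A" .
  have fbc: "f b \<le> f c" using d by simp
  have u: "sqrt (g c) \<le> sqrt (g b)" using gbc by simp
  have p: "sqrt (f b) \<le> sqrt (f c)" using fbc by simp
  have k1: "(sqrt (f c) - sqrt (f b))^2 \<le> 2 * (?D b + ?D c)"
    using sqrt_ineq_pair[OF u p] by simp
  have e1: "sqrt (f c) * sqrt (f c) = f c" using f0 bc by simp
  have e2: "sqrt (f b) * sqrt (f b) = f b" using f0 bc by simp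
  have e3: "(sqrt (f c) - sqrt (f b)) * (sqrt (f c) + sqrt (f b)) = sqrt (f c) * sqrt (f c) - sqrt (f b) * sqrt (f b)"
    by (simp add: algebra_simps)
  have prod: "f c - f b = (sqrt (f c) - sqrt (f b)) * (sqrt (f c) + sqrt (f b))"
    using e1 e2 e3 by simp
  have sum2: "sqrt (f c) + sqrt (f b) \<le> 2"
    using fle1[OF bc(1)] fle1[OF bc(2)] real_sqrt_le_1_iff[of "f c"] real_sqrt_le_1_iff[of "f b"] by linarith
  have "d \<le> (sqrt (f c) - sqrt (f b)) * 2"
  proof -
    have "(sqrt (f c) - sqrt (f b)) * (sqrt (f c) + sqrt (f b)) \<le> (sqrt (f c) - sqrt (f b)) * 2"
      by (rule mult_left_mono[OF sum2]) (use p in simp)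
    then show ?thesis using d prod by linarith
  qed
  then have "d / 2 \<le> sqrt (f c) - sqrt (f b)" by simp
  then have h1: "(d / 2)^2 \<le> (sqrt (f c) - sqrt (f b))^2" using d by (intro power_mono) auto
  have h2: "(d / 2)^2 = d^2 / 4" by (simp add: power_divide)
  have h3: "d^2 / 8 \<le> sum ?D A" by (rule lin4[OF h1 h2 k1 s2])
  show ?thesis by (rule lin5[OF bc_identity[OF fin f0 g0 sf sg] h3])
qed


context TS begin

definition realat :: "nat \<Rightarrow> ('x \<Rightarrow> 'x \<Rightarrow> 'a pmf) \<Rightarrow> bool" where
  "realat h f \<longleftrightarrow> (\<forall>x x'.
        obs_occurs A init T q h x \<and> (\<Sum>a'\<in>A. obs_trans S T q h x a' x') > 0 \<longrightarrow>
        (\<forall>a\<in>A. pmf (f x x') a = obs_trans S T q h x a x' / (\<Sum>a'\<in>A. obs_trans S T q h x a' x')))"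

lemma realat_ex: "1 \<le> h \<Longrightarrow> h < H \<Longrightarrow> \<exists>f\<in>F. realat h f"
  using realz unfolding realizable_def realat_def by auto

abbreviation "tt h s a s' \<equiv> pmf (T h s a) s'"
definition ZZ :: "nat \<Rightarrow> 's \<Rightarrow> 's \<Rightarrow> real" where "ZZ h s s' = (\<Sum>a\<in>A. tt h s a s')"

definition \<gamma> :: real where "\<gamma> = (1 - 2 * \<eta>)^2 / (16 * real (card A)^2)"

lemma fstar_val:
  assumes rf: "realat h f" and s: "s \<in> reach A init T h" "s \<in> S" "x \<in> set_pmf (q s)"
    and s': "s' \<in> S" "x' \<in> set_pmf (q s')" and Z: "ZZ h s s' > 0" and a: "a \<in> A"
  shows "pmf (f x x') a = tt h s a s' / ZZ h s s'"
proof -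
  have occ: "obs_occurs A init T q h x" unfolding obs_occurs_def using s by auto
  have ot: "obs_trans S T q h x a' x' = pmf (q s') x' * tt h s a' s'" for a'
    unfolding obs_trans_def using dcd s s' by simp
  have qp: "pmf (q s') x' > 0" using s'(2) by (simp add: pmf_positive)
  have sumeq: "(\<Sum>a'\<in>A. pmf (q s') x' * tt h s a' s') = pmf (q s') x' * ZZ h s s'"
    unfolding ZZ_def by (simp add: sum_distrib_left)
  have pos: "(\<Sum>a'\<in>A. obs_trans S T q h x a' x') > 0" unfolding ot sumeq using qp Z by simp
  have "pmf (f x x') a = obs_trans S T q h x a x' / (\<Sum>a'\<in>A. obs_trans S T q h x a' x')"
    using rf occ pos a unfolding realat_def by blast
  also have "\<dots> = tt h s a s' / ZZ h s s'" unfolding ot sumeq using qp by simp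
  finally show ?thesis .
qed

lemma xi_h: "h \<in> {1..H} \<Longrightarrow> s \<in> S \<Longrightarrow> a \<in> A \<Longrightarrow> set_pmf (\<xi> h s a) \<subseteq> A \<and> pmf (\<xi> h s a) a \<ge> 1 - \<eta> \<and>
          (\<forall>s'. tt h s a s' = (\<Sum>a'\<in>A. (if Tc h s a' = s' then 1 else 0) * pmf (\<xi> h s a) a'))"
  using xi by blast

lemma exists_c:
  assumes h: "h \<in> {1..H}" and s: "s \<in> S" and Z: "ZZ h s s' > 0"
  shows "\<exists>c\<in>A. Tc h s c = s'"
proof (rule ccontr)
  assume "\<not> ?thesis"
  then have "tt h s a s' = 0" if "a \<in> A" for a
    using xi_h[OF h s that] by auto
  then have "ZZ h s s' = 0" unfolding ZZ_def by simp
  then show False using Z by simp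
qed

lemma tt_c:
  assumes h: "h \<in> {1..H}" and s: "s \<in> S" and c: "c \<in> A" "Tc h s c = s'"
  shows "tt h s c s' \<ge> 1 - \<eta>"
proof -
  have "tt h s c s' = (\<Sum>a'\<in>A. (if Tc h s a' = s' then 1 else 0) * pmf (\<xi> h s c) a')"
    using xi_h[OF h s c(1)] by blast
  also have "\<dots> \<ge> (if Tc h s c = s' then 1 else 0) * pmf (\<xi> h s c) c"
    by (rule member_le_sum[OF c(1)]) (auto simp: finA)
  finally show ?thesis using xi_h[OF h s c(1)] c by simp
qed

lemma tt_b:
  assumes h: "h \<in> {1..H}" and s: "s \<in> S" and b: "b \<in> A" "Tc h s b \<noteq> s'"
  shows "tt h s b s' \<le> \<eta>"
proof -
  have x1: "set_pmf (\<xi> h s b) \<subseteq> A" "pmf (\<xi> h s b) b \<ge> 1 - \<eta>" using xi_h[OF h s b(1)] by auto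
  have "tt h s b s' = (\<Sum>a'\<in>A. (if Tc h s a' = s' then 1 else 0) * pmf (\<xi> h s b) a')"
    using xi_h[OF h s b(1)] by blast
  also have "\<dots> = (\<Sum>a'\<in>A - {b}. (if Tc h s a' = s' then 1 else 0) * pmf (\<xi> h s b) a')"
    using b finA by (subst sum.remove[OF finA b(1)]) auto
  also have "\<dots> \<le> (\<Sum>a'\<in>A - {b}. pmf (\<xi> h s b) a')"
    by (rule sum_mono) auto
  also have "\<dots> = (\<Sum>a'\<in>A. pmf (\<xi> h s b) a') - pmf (\<xi> h s b) b"
    using sum_diff1[OF finA, of "pmf (\<xi> h s b)" b] b by simp
  also have "\<dots> = 1 - pmf (\<xi> h s b) b" using sum_pmf_eq_1[OF finA x1(1)] by simp
  finally show ?thesis using x1 by simp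
qed

lemma ZZ_le: "ZZ h s s' \<le> real (card A)"
proof -
  have "ZZ h s s' \<le> (\<Sum>a\<in>A. 1)" unfolding ZZ_def by (rule sum_mono) (simp add: pmf_le_1)
  then show ?thesis by simp
qed

lemma ZZ_ge: "0 \<le> ZZ h s s'" unfolding ZZ_def by (simp add: sum_nonneg)

lemma point_ineq:
  assumes h: "1 \<le> h" "h < H" and rf: "realat h f" and s: "s \<in> reach A init T h" "s \<in> S" "x \<in> set_pmf (q s)"
    and s': "s' \<in> S" "x' \<in> set_pmf (q s')" and gA: "set_pmf (g x x') \<subseteq> A"
  shows "(\<Sum>a\<in>A. tt h s a s' * sqrt (pmf (g x x') a / pmf (f x x') a))
     \<le> ZZ h s s' * (1 - \<gamma> * (if Tc h s (sel (\<lambda>a. pmf (g x x') a)) \<noteq> s' then 1 else 0))"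
proof (cases "ZZ h s s' = 0")
  case True
  then have "tt h s a s' = 0" if "a \<in> A" for a
    using that sum_nonneg_eq_0_iff[OF finA, of "\<lambda>a. tt h s a s'"] unfolding ZZ_def by auto
  then show ?thesis using True by simp
next
  case False
  then have Zp: "ZZ h s s' > 0" using ZZ_ge[of h s s'] by simp
  have hH: "h \<in> {1..H}" using h by auto
  define Fa where "Fa a = tt h s a s' / ZZ h s s'" for a
  define Ga where "Ga a = pmf (g x x') a" for a
  have fv: "pmf (f x x') a = Fa a" if "a \<in> A" for a
    unfolding Fa_def by (rule fstar_val[OF rf s s' Zp that])
  have trm: "tt h s a s' * sqrt (pmf (g x x') a / pmf (f x x') a) = ZZ h s s' * sqrt (Fa a * Ga a)"
    if a: "a \<in> A" for a
  proof (cases "tt h s a s' = 0")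
    case True
    then show ?thesis by (simp add: Fa_def)
  next
    case False
    then have Fp: "Fa a > 0" unfolding Fa_def using Zp by (simp add: pmf_nonneg order_le_neq_trans)
    have "sqrt (Fa a * Ga a) = sqrt (Fa a * Fa a * (Ga a / Fa a))" using Fp by simp
    also have "\<dots> = sqrt (Fa a * Fa a) * sqrt (Ga a / Fa a)" by (rule real_sqrt_mult)
    also have "\<dots> = Fa a * sqrt (Ga a / Fa a)" using Fp by (simp add: real_sqrt_mult_self)
    finally have "ZZ h s s' * sqrt (Fa a * Ga a) = ZZ h s s' * Fa a * sqrt (Ga a / Fa a)" by simp
    also have "ZZ h s s' * Fa a = tt h s a s'" unfolding Fa_def using Zp by simp
    finally show ?thesis using fv[OF a] by (simp add: Ga_def)
  qed
  have LHS: "(\<Sum>a\<in>A. tt h s a s' * sqrt (pmf (g x x') a / pmf (f x x') a)) = ZZ h s s' * (\<Sum>a\<in>A. sqrt (Fa a * Ga a))"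
    by (simp add: trm sum_distrib_left)
  have F0: "\<forall>a\<in>A. 0 \<le> Fa a" unfolding Fa_def using Zp by simp
  have G0: "\<forall>a\<in>A. 0 \<le> Ga a" unfolding Ga_def by simp
  have sF: "sum Fa A = 1" unfolding Fa_def using Zp by (simp add: sum_divide_distrib[symmetric] ZZ_def)
  have sG: "sum Ga A = 1" unfolding Ga_def by (rule sum_pmf_eq_1[OF finA gA])
  show ?thesis
  proof (cases "Tc h s (sel (\<lambda>a. pmf (g x x') a)) \<noteq> s'")
    case False
    then show ?thesis unfolding LHS using bc_le1[OF finA F0 G0 sF sG] Zp by simp
  next
    case True
    let ?b = "sel (\<lambda>a. pmf (g x x') a)"
    have bA: "?b \<in> A" and bmax: "\<forall>a\<in>A. Ga a \<le> Ga ?b"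
      using sel unfolding argmax_selector_def Ga_def by auto
    obtain c where c: "c \<in> A" "Tc h s c = s'" using exists_c[OF hH s(2) Zp] by blast
    have bc: "?b \<noteq> c" using True c by auto
    have tc: "tt h s c s' \<ge> 1 - \<eta>" by (rule tt_c[OF hH s(2) c])
    have tb: "tt h s ?b s' \<le> \<eta>" by (rule tt_b[OF hH s(2) bA True])
    define d where "d = (1 - 2 * \<eta>) / real (card A)"
    have d0: "0 \<le> d" unfolding d_def using eta1 by simp
    have "d \<le> (1 - 2 * \<eta>) / ZZ h s s'"
      unfolding d_def by (rule divide_left_mono) (use eta1 Zp ZZ_le[of h s s'] in auto)
    also have "\<dots> \<le> (tt h s c s' - tt h s ?b s') / ZZ h s s'"
      by (rule divide_right_mono) (use tc tb Zp in auto)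
    also have "\<dots> = Fa c - Fa ?b" unfolding Fa_def by (simp add: diff_divide_distrib)
    finally have dd: "d \<le> Fa c - Fa ?b" .
    have "(\<Sum>a\<in>A. sqrt (Fa a * Ga a)) \<le> 1 - d^2 / 16"
      by (rule bc_gap[OF finA F0 G0 sF sG bA c(1) bc _ dd d0]) (use bmax c in auto)
    moreover have "d^2 / 16 = \<gamma>" unfolding d_def \<gamma>_def by (simp add: power_divide)
    ultimately show ?thesis unfolding LHS using True Zp by simp
  qed
qed

end


lemma Dh_mono:
  fixes G1 G2 :: "'x \<times> 'a \<times> 'x \<Rightarrow> ennreal"
  assumes "\<And>s xs x. (s, xs) \<in> set_pmf (roll init T q \<pi> (h - 1)) \<Longrightarrow> x \<in> set_pmf (q s) \<Longrightarrow>
    (\<integral>\<^sup>+a. \<integral>\<^sup>+s'. \<integral>\<^sup>+x'. G1 (x, a, x') \<partial>q s' \<partial>T h s a \<partial>pmf_of_set A) \<le>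
    (\<integral>\<^sup>+a. \<integral>\<^sup>+s'. \<integral>\<^sup>+x'. G2 (x, a, x') \<partial>q s' \<partial>T h s a \<partial>pmf_of_set A)"
  shows "(\<integral>\<^sup>+y. G1 y \<partial>sample_triple A init T q \<pi> h) \<le> (\<integral>\<^sup>+y. G2 y \<partial>sample_triple A init T q \<pi> h)"
  unfolding sample_triple_def
  apply (simp add: split_beta')
  apply (rule nn_integral_mono_AE)
  apply (simp add: AE_measure_pmf_iff)
  apply clarify
  apply (rule nn_integral_mono_AE)
  apply (simp add: AE_measure_pmf_iff)
  using assms by auto


context TS begin

lemma inner_eq:
  fixes G :: "'x \<times> 'a \<times> 'x \<Rightarrow> ennreal"
  assumes h: "h \<in> {1..H}" and s: "s \<in> S"
  shows "(\<integral>\<^sup>+a. \<integral>\<^sup>+s'. \<integral>\<^sup>+x'. G (x, a, x') \<partial>q s' \<partial>T h s a \<partial>pmf_of_set A) =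
    (\<Sum>s'\<in>S. \<integral>\<^sup>+x'. (\<Sum>a\<in>A. ennreal (tt h s a s') * G (x, a, x')) \<partial>q s') / of_nat (card A)"
proof -
  have e1: "(\<integral>\<^sup>+s'. (\<integral>\<^sup>+x'. G (x, a, x') \<partial>q s') \<partial>T h s a) =
      (\<Sum>s'\<in>S. (\<integral>\<^sup>+x'. G (x, a, x') \<partial>q s') * ennreal (tt h s a s'))" if a: "a \<in> A" for a
    by (rule nn_integral_measure_pmf_support[OF finS]) (use TS[OF h s a] in auto)
  have "(\<integral>\<^sup>+a. \<integral>\<^sup>+s'. \<integral>\<^sup>+x'. G (x, a, x') \<partial>q s' \<partial>T h s a \<partial>pmf_of_set A) =
      (\<Sum>a\<in>A. \<integral>\<^sup>+s'. \<integral>\<^sup>+x'. G (x, a, x') \<partial>q s' \<partial>T h s a) / of_nat (card A)"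
    by (rule nn_integral_pmf_of_set[OF Ane finA])
  also have "(\<Sum>a\<in>A. \<integral>\<^sup>+s'. \<integral>\<^sup>+x'. G (x, a, x') \<partial>q s' \<partial>T h s a) =
      (\<Sum>a\<in>A. \<Sum>s'\<in>S. (\<integral>\<^sup>+x'. G (x, a, x') \<partial>q s') * ennreal (tt h s a s'))"
    by (rule sum.cong[OF refl]) (rule e1)
  also have "\<dots> = (\<Sum>s'\<in>S. \<Sum>a\<in>A. (\<integral>\<^sup>+x'. G (x, a, x') \<partial>q s') * ennreal (tt h s a s'))"
    by (rule sum.swap)
  also have "\<dots> = (\<Sum>s'\<in>S. \<integral>\<^sup>+x'. (\<Sum>a\<in>A. ennreal (tt h s a s') * G (x, a, x')) \<partial>q s')"
  proof (rule sum.cong[OF refl])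
    fix s' assume "s' \<in> S"
    have "(\<integral>\<^sup>+x'. (\<Sum>a\<in>A. ennreal (tt h s a s') * G (x, a, x')) \<partial>q s') =
      (\<Sum>a\<in>A. \<integral>\<^sup>+x'. ennreal (tt h s a s') * G (x, a, x') \<partial>q s')"
      by (rule nn_integral_sum) simp
    also have "\<dots> = (\<Sum>a\<in>A. (\<integral>\<^sup>+x'. G (x, a, x') \<partial>q s') * ennreal (tt h s a s'))"
    proof (rule sum.cong[OF refl])
      fix a assume "a \<in> A"
      have "(\<integral>\<^sup>+x'. ennreal (tt h s a s') * G (x, a, x') \<partial>q s') = ennreal (tt h s a s') * (\<integral>\<^sup>+x'. G (x, a, x') \<partial>q s')"
        by (rule nn_integral_cmult) simp
      then show "(\<integral>\<^sup>+x'. ennreal (tt h s a s') * G (x, a, x') \<partial>q s') = (\<integral>\<^sup>+x'. G (x, a, x') \<partial>q s') * ennreal (tt h s a s')"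
        by (simp add: mult.commute)
    qed
    finally show "(\<Sum>a\<in>A. (\<integral>\<^sup>+x'. G (x, a, x') \<partial>q s') * ennreal (tt h s a s')) =
      (\<integral>\<^sup>+x'. (\<Sum>a\<in>A. ennreal (tt h s a s') * G (x, a, x')) \<partial>q s')" by simp
  qed
  finally show ?thesis .
qed

definition phi :: "('x \<Rightarrow> 'x \<Rightarrow> 'a pmf) \<Rightarrow> ('x \<Rightarrow> 'x \<Rightarrow> 'a pmf) \<Rightarrow> 'x \<times> 'a \<times> 'x \<Rightarrow> real" where
  "phi f g y = (case y of (x, a, x') \<Rightarrow> sqrt (pmf (g x x') a / pmf (f x x') a))"

definition alg :: "('x \<Rightarrow> 'x \<Rightarrow> 'a pmf) \<Rightarrow> 'x \<Rightarrow> 'x \<Rightarrow> 'a" where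
  "alg g x x' = sel (\<lambda>a. pmf (g x x') a)"

definition indm :: "nat \<Rightarrow> ('x \<Rightarrow> 'x \<Rightarrow> 'a) \<Rightarrow> 'x \<times> 'a \<times> 'x \<Rightarrow> real" where
  "indm h \<alpha> y = (case y of (x, a, x') \<Rightarrow> if Tc h (decoder S q x) (\<alpha> x x') \<noteq> decoder S q x' then 1 else 0)"

lemma gamma_pos: "0 < \<gamma>" unfolding \<gamma>_def using eta1 cardA by simp

lemma gamma_le1: "\<gamma> \<le> 1"
proof -
  have "(1 - 2 * \<eta>)^2 \<le> 1" using eta0 eta1 by (simp add: abs_le_square_iff power_le_one)
  moreover have "1 \<le> 16 * real (card A)^2"
  proof -
    have c1: "1 \<le> real (card A)" using cardA by simp
    have "1 \<le> real (card A)^2" using c1 by (rule one_le_power)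
    then show ?thesis by linarith
  qed
  ultimately show ?thesis unfolding \<gamma>_def by (auto simp: divide_le_eq_1)
qed

lemma phi_le:
  assumes h: "1 \<le> h" "h < H" and pol: "\<forall>j\<in>{1..H}. \<forall>ys. \<pi> j ys \<in> A"
    and rf: "realat h f" and gF: "g \<in> F"
  shows "(\<integral>\<^sup>+y. ennreal (phi f g y) \<partial>sample_triple A init T q \<pi> h) \<le>
         (\<integral>\<^sup>+y. ennreal (1 - \<gamma> * indm h (alg g) y) \<partial>sample_triple A init T q \<pi> h)"
proof (rule Dh_mono)
  fix s xs x assume sx: "(s, xs) \<in> set_pmf (roll init T q \<pi> (h - 1))" "x \<in> set_pmf (q s)"
  have hH: "h \<in> {1..H}" using h by auto
  have sr: "s \<in> reach A init T h" using roll_reach[OF pol sx(1)] h by simp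
  have sS: "s \<in> S" using reach_S[OF _ _ sr] h by simp
  have dx: "decoder S q x = s" using dcd[OF sS sx(2)] .
  let ?G1 = "\<lambda>y. ennreal (phi f g y)" and ?G2 = "\<lambda>y. ennreal (1 - \<gamma> * indm h (alg g) y)"
  have pt: "(\<Sum>a\<in>A. ennreal (tt h s a s') * ?G1 (x, a, x')) \<le> (\<Sum>a\<in>A. ennreal (tt h s a s') * ?G2 (x, a, x'))"
    if s': "s' \<in> S" "x' \<in> set_pmf (q s')" for s' x'
  proof -
    have dx': "decoder S q x' = s'" using dcd[OF s'] .
    have gA: "set_pmf (g x x') \<subseteq> A" using Fsupp gF by auto
    have ind: "indm h (alg g) (x, a, x') = (if Tc h s (sel (\<lambda>a. pmf (g x x') a)) \<noteq> s' then 1 else 0)" for a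
      by (simp add: indm_def alg_def dx dx')
    have g2: "0 \<le> 1 - \<gamma> * indm h (alg g) (x, a, x')" for a
      using gamma_le1 unfolding ind by simp
    have l: "(\<Sum>a\<in>A. ennreal (tt h s a s') * ?G1 (x, a, x')) = ennreal (\<Sum>a\<in>A. tt h s a s' * sqrt (pmf (g x x') a / pmf (f x x') a))"
      by (simp add: phi_def ennreal_mult''[symmetric] sum_ennreal)
    have r: "(\<Sum>a\<in>A. ennreal (tt h s a s') * ?G2 (x, a, x')) =
      ennreal (ZZ h s s' * (1 - \<gamma> * (if Tc h s (sel (\<lambda>a. pmf (g x x') a)) \<noteq> s' then 1 else 0)))"
    proof -
      have "(\<Sum>a\<in>A. ennreal (tt h s a s') * ?G2 (x, a, x')) =
        (\<Sum>a\<in>A. ennreal (tt h s a s' * (1 - \<gamma> * (if Tc h s (sel (\<lambda>a. pmf (g x x') a)) \<noteq> s' then 1 else 0))))"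
        using g2 unfolding ind by (intro sum.cong refl) (simp add: ennreal_mult'')
      also have "\<dots> = ennreal (\<Sum>a\<in>A. tt h s a s' * (1 - \<gamma> * (if Tc h s (sel (\<lambda>a. pmf (g x x') a)) \<noteq> s' then 1 else 0)))"
        using gamma_le1 by (intro sum_ennreal) simp
      also have "\<dots> = ennreal (ZZ h s s' * (1 - \<gamma> * (if Tc h s (sel (\<lambda>a. pmf (g x x') a)) \<noteq> s' then 1 else 0)))"
        unfolding ZZ_def by (simp add: sum_distrib_right)
      finally show ?thesis .
    qed
    show ?thesis unfolding l r
      by (rule ennreal_leI, rule point_ineq[where g=g and f=f and x=x and x'=x', OF h rf sr sS sx(2) s' gA])
  qed
  show "(\<integral>\<^sup>+a. \<integral>\<^sup>+s'. \<integral>\<^sup>+x'. ?G1 (x, a, x') \<partial>q s' \<partial>T h s a \<partial>pmf_of_set A) \<le>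
    (\<integral>\<^sup>+a. \<integral>\<^sup>+s'. \<integral>\<^sup>+x'. ?G2 (x, a, x') \<partial>q s' \<partial>T h s a \<partial>pmf_of_set A)"
    unfolding inner_eq[OF hH sS, where G="?G1" and x=x] inner_eq[OF hH sS, where G="?G2" and x=x]
  proof (rule divide_right_mono_ennreal, rule sum_mono)
    fix s' assume s': "s' \<in> S"
    show "(\<integral>\<^sup>+x'. (\<Sum>a\<in>A. ennreal (tt h s a s') * ?G1 (x, a, x')) \<partial>q s') \<le>
       (\<integral>\<^sup>+x'. (\<Sum>a\<in>A. ennreal (tt h s a s') * ?G2 (x, a, x')) \<partial>q s')"
      by (rule nn_integral_mono_AE) (use pt s' in \<open>auto simp: AE_measure_pmf_iff\<close>)
  qed
qed

lemma int_indm: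
  "(\<integral>\<^sup>+y. ennreal (1 - \<gamma> * indm h \<alpha> y) \<partial>sample_triple A init T q \<pi> h) = ennreal (1 - \<gamma> * md \<pi> h \<alpha>)"
proof -
  let ?D = "sample_triple A init T q \<pi> h"
  have b: "\<bar>indm h \<alpha> y\<bar> \<le> 1" for y unfolding indm_def by (auto split: prod.splits)
  have "(\<integral>\<^sup>+y. ennreal (1 - \<gamma> * indm h \<alpha> y) \<partial>?D) = ennreal (measure_pmf.expectation ?D (\<lambda>y. 1 - \<gamma> * indm h \<alpha> y))"
  proof (rule nn_integral_eq_integral)
    show "integrable (measure_pmf ?D) (\<lambda>y. 1 - \<gamma> * indm h \<alpha> y)"
      by (rule exp_int[where B=2]) (use b gamma_le1 gamma_pos in \<open>auto simp: indm_def split: prod.splits\<close>)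
    show "AE y in measure_pmf ?D. 0 \<le> 1 - \<gamma> * indm h \<alpha> y"
      using gamma_le1 by (auto simp: indm_def split: prod.splits)
  qed
  also have "measure_pmf.expectation ?D (\<lambda>y. 1 - \<gamma> * indm h \<alpha> y) = 1 - \<gamma> * measure_pmf.expectation ?D (indm h \<alpha>)"
    using exp_diff[where B=1 and p="?D" and f="\<lambda>_. 1" and g="\<lambda>y. \<gamma> * indm h \<alpha> y"] b gamma_le1 gamma_pos
    by (simp add: abs_mult mult_le_one)
  also have "measure_pmf.expectation ?D (indm h \<alpha>) = md \<pi> h \<alpha>"
    unfolding md_def prob_exp indm_def
    by (rule Bochner_Integration.integral_cong[OF refl]) (auto split: prod.splits)
  finally show ?thesis .
qed

end


lemma iid_supp: "zs \<in> set_pmf (iid n p) \<Longrightarrow> set zs \<subseteq> set_pmf p"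
  by (induction n arbitrary: zs) (auto, blast)

lemma iid_prod:
  assumes "\<And>z. 0 \<le> \<phi> z"
  shows "(\<integral>\<^sup>+zs. ennreal (prod_list (map \<phi> zs)) \<partial>iid n p) = (\<integral>\<^sup>+z. ennreal (\<phi> z) \<partial>p) ^ n"
proof (induction n)
  case 0
  then show ?case by simp
next
  case (Suc n)
  have nn: "0 \<le> prod_list (map \<phi> zs)" for zs by (rule prod_list_nonneg) (use assms in auto)
  have "(\<integral>\<^sup>+zs. ennreal (prod_list (map \<phi> zs)) \<partial>iid (Suc n) p) =
      (\<integral>\<^sup>+z. \<integral>\<^sup>+zs. ennreal (\<phi> z) * ennreal (prod_list (map \<phi> zs)) \<partial>iid n p \<partial>p)"
    by (simp add: ennreal_mult'' nn)
  also have "\<dots> = (\<integral>\<^sup>+z. ennreal (\<phi> z) * (\<integral>\<^sup>+z. ennreal (\<phi> z) \<partial>p) ^ n \<partial>p)"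
    by (simp add: nn_integral_cmult Suc.IH)
  also have "\<dots> = (\<integral>\<^sup>+z. ennreal (\<phi> z) \<partial>p) ^ Suc n"
    by (simp add: nn_integral_multc mult.commute)
  finally show ?case .
qed

context TS begin

lemma lik_ratio:
  "(\<forall>y\<in>set D. 0 < (case y of (x, a, x') \<Rightarrow> pmf (f x x') a)) \<Longrightarrow>
   prod_list (map (phi f g) D) = sqrt (likelihood g D / likelihood f D) \<and> 0 < likelihood f D"
proof (induction D)
  case Nil
  then show ?case by (simp add: likelihood_def)
next
  case (Cons y D)
  obtain x a x' where y: "y = (x, a, x')" by (cases y) auto
  have p: "0 < pmf (f x x') a" using Cons.prems y by auto
  have IH: "prod_list (map (phi f g) D) = sqrt (likelihood g D / likelihood f D)" "0 < likelihood f D"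
    using Cons by auto
  have lg: "likelihood g (y # D) = pmf (g x x') a * likelihood g D"
    and lf: "likelihood f (y # D) = pmf (f x x') a * likelihood f D"
    by (simp_all add: likelihood_def y)
  have "prod_list (map (phi f g) (y # D)) = sqrt (pmf (g x x') a / pmf (f x x') a) * sqrt (likelihood g D / likelihood f D)"
    using IH by (simp add: phi_def y)
  also have "\<dots> = sqrt ((pmf (g x x') a / pmf (f x x') a) * (likelihood g D / likelihood f D))"
    by (rule real_sqrt_mult[symmetric])
  also have "\<dots> = sqrt (likelihood g (y # D) / likelihood f (y # D))"
    unfolding lg lf by simp
  finally show ?case using lf p IH by simp
qed

lemma supp_sample:
  assumes y: "y \<in> set_pmf (sample_triple A init T q \<pi> h)"
  shows "\<exists>s xs x a s' x'. y = (x, a, x') \<and> (s, xs) \<in> set_pmf (roll init T q \<pi> (h - 1)) \<and> x \<in> set_pmf (q s)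
     \<and> a \<in> A \<and> s' \<in> set_pmf (T h s a) \<and> x' \<in> set_pmf (q s')"
  using y unfolding sample_triple_def by (auto simp: finA Ane; blast)

lemma supp_pos:
  assumes h: "1 \<le> h" "h < H" and pol: "\<forall>j\<in>{1..H}. \<forall>ys. \<pi> j ys \<in> A" and rf: "realat h f"
    and y: "y \<in> set_pmf (sample_triple A init T q \<pi> h)"
  shows "0 < (case y of (x, a, x') \<Rightarrow> pmf (f x x') a)"
proof -
  obtain s xs x a s' x' where yy: "y = (x, a, x')" "(s, xs) \<in> set_pmf (roll init T q \<pi> (h - 1))" "x \<in> set_pmf (q s)"
     "a \<in> A" "s' \<in> set_pmf (T h s a)" "x' \<in> set_pmf (q s')" using supp_sample[OF y] by blast
  have hH: "h \<in> {1..H}" using h by auto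
  have sr: "s \<in> reach A init T h" using roll_reach[OF pol yy(2)] h by simp
  have sS: "s \<in> S" using reach_S[OF _ _ sr] h by simp
  have s'S: "s' \<in> S" using TS[OF hH sS yy(4)] yy(5) by auto
  have tp: "0 < tt h s a s'" using yy(5) by (simp add: pmf_positive)
  have "tt h s a s' \<le> ZZ h s s'" unfolding ZZ_def by (rule member_le_sum[OF yy(4)]) (auto simp: finA)
  then have Zp: "0 < ZZ h s s'" using tp by simp
  have "pmf (f x x') a = tt h s a s' / ZZ h s s'" by (rule fstar_val[OF rf sr sS yy(3) s'S yy(6) Zp yy(4)])
  then show ?thesis using yy(1) tp Zp by simp
qed

lemma md_le1: "md \<pi> h \<alpha> \<le> 1" and md_ge0: "0 \<le> md \<pi> h \<alpha>"
  unfolding md_def by simp_all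

lemma cher:
  assumes h: "1 \<le> h" "h < H" and pol: "\<forall>j\<in>{1..H}. \<forall>ys. \<pi> j ys \<in> A" and rf: "realat h f" and gF: "g \<in> F"
  shows "emeasure (iid n (sample_triple A init T q \<pi> h)) {D. likelihood f D \<le> likelihood g D}
     \<le> ennreal ((1 - \<gamma> * md \<pi> h (alg g)) ^ n)"
proof -
  let ?D = "sample_triple A init T q \<pi> h"
  have ph0: "0 \<le> phi f g y" for y unfolding phi_def by (auto split: prod.splits)
  have "emeasure (iid n ?D) {D. likelihood f D \<le> likelihood g D} =
     (\<integral>\<^sup>+D. indicator {D. likelihood f D \<le> likelihood g D} D \<partial>iid n ?D)"
    by simp
  also have "\<dots> \<le> (\<integral>\<^sup>+D. ennreal (prod_list (map (phi f g) D)) \<partial>iid n ?D)"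
  proof (rule nn_integral_mono_AE)
    show "AE D in measure_pmf (iid n ?D). indicator {D. likelihood f D \<le> likelihood g D} D \<le> ennreal (prod_list (map (phi f g) D))"
      unfolding AE_measure_pmf_iff
    proof
      fix D assume D: "D \<in> set_pmf (iid n ?D)"
      have "\<forall>y\<in>set D. 0 < (case y of (x, a, x') \<Rightarrow> pmf (f x x') a)"
        using iid_supp[OF D] supp_pos[OF h pol rf] by blast
      note lr = lik_ratio[OF this, of g]
      show "indicator {D. likelihood f D \<le> likelihood g D} D \<le> ennreal (prod_list (map (phi f g) D))"
      proof (cases "likelihood f D \<le> likelihood g D")
        case True
        then have "1 \<le> likelihood g D / likelihood f D" using lr by simp
        then have "1 \<le> prod_list (map (phi f g) D)" using lr by simp
        then show ?thesis using True by simp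
      qed simp
    qed
  qed
  also have "\<dots> = (\<integral>\<^sup>+y. ennreal (phi f g y) \<partial>?D) ^ n" by (rule iid_prod[OF ph0])
  also have "\<dots> \<le> (ennreal (1 - \<gamma> * md \<pi> h (alg g))) ^ n"
    by (rule power_mono) (use phi_le[OF h pol rf gF] int_indm in auto)
  also have "\<dots> = ennreal ((1 - \<gamma> * md \<pi> h (alg g)) ^ n)"
    by (rule ennreal_power) (use gamma_le1 gamma_pos md_le1[of \<pi> h "alg g"] md_ge0[of \<pi> h "alg g"] in \<open>simp add: mult_le_one\<close>)
  finally show ?thesis .
qed

end


context TS begin

lemma fstar_md0:
  assumes h: "1 \<le> h" "h < H" and pol: "\<forall>j\<in>{1..H}. \<forall>ys. \<pi> j ys \<in> A" and rf: "realat h f" and fF: "f \<in> F"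
  shows "md \<pi> h (alg f) \<le> 0"
proof -
  let ?D = "sample_triple A init T q \<pi> h"
  have "(\<integral>\<^sup>+y. ennreal (phi f f y) \<partial>?D) = (\<integral>\<^sup>+y. 1 \<partial>?D)"
  proof (rule nn_integral_cong_AE)
    show "AE y in measure_pmf ?D. ennreal (phi f f y) = 1"
      unfolding AE_measure_pmf_iff
    proof
      fix y assume y: "y \<in> set_pmf ?D"
      have "0 < (case y of (x, a, x') \<Rightarrow> pmf (f x x') a)" by (rule supp_pos[OF h pol rf y])
      then show "ennreal (phi f f y) = 1" unfolding phi_def by (auto split: prod.splits)
    qed
  qed
  also have "\<dots> = 1" by simp
  finally have "1 \<le> ennreal (1 - \<gamma> * md \<pi> h (alg f))"
    using phi_le[OF h pol rf fF] int_indm by metis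
  then have "1 \<le> 1 - \<gamma> * md \<pi> h (alg f)"
    by (metis ennreal_1 ennreal_le_iff2 less_le_trans not_le zero_less_one)
  then show ?thesis using gamma_pos by (simp add: mult_le_0_iff)
qed

lemma stage_fail:
  assumes h: "1 \<le> h" "h < H" and pol: "\<forall>j\<in>{1..H}. \<forall>ys. \<pi> j ys \<in> A" and \<beta>: "0 \<le> \<beta>" "\<beta> \<le> 1"
  shows "measure_pmf.prob (iid n (sample_triple A init T q \<pi> h))
           {D. md \<pi> h (\<lambda>x x'. sel (\<lambda>a. pmf (orcl h D x x') a)) > \<beta>}
         \<le> real (card F - 1) * (1 - \<gamma> * \<beta>) ^ n"
proof -
  let ?D = "sample_triple A init T q \<pi> h"
  let ?M = "measure_pmf (iid n ?D)"
  obtain f where fF: "f \<in> F" and rf: "realat h f" using realat_ex[OF h] by blast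
  define Bad where "Bad = {g\<in>F. md \<pi> h (alg g) > \<beta>}"
  have finB: "finite Bad" unfolding Bad_def using finF by simp
  have fB: "f \<notin> Bad" unfolding Bad_def using fstar_md0[OF h pol rf fF] \<beta> by auto
  have cB: "card Bad \<le> card F - 1"
  proof -
    have "Bad \<subseteq> F - {f}" using fB unfolding Bad_def by auto
    then have "card Bad \<le> card (F - {f})" by (rule card_mono[rotated]) (use finF in simp)
    also have "\<dots> = card F - 1" using fF finF by simp
    finally show ?thesis .
  qed
  have x0: "0 \<le> 1 - \<gamma> * \<beta>" using gamma_le1 gamma_pos \<beta> by (simp add: mult_le_one)
  have sub: "{D. md \<pi> h (\<lambda>x x'. sel (\<lambda>a. pmf (orcl h D x x') a)) > \<beta>} \<subseteq>
      (\<Union>g\<in>Bad. {D. likelihood f D \<le> likelihood g D})"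
  proof
    fix D assume D: "D \<in> {D. md \<pi> h (\<lambda>x x'. sel (\<lambda>a. pmf (orcl h D x x') a)) > \<beta>}"
    have o: "orcl h D \<in> F" "likelihood f D \<le> likelihood (orcl h D) D"
      using orc h fF unfolding mle_oracle_def by auto
    have "alg (orcl h D) = (\<lambda>x x'. sel (\<lambda>a. pmf (orcl h D x x') a))" unfolding alg_def by (rule ext)+ simp
    then have "orcl h D \<in> Bad" using D o unfolding Bad_def by simp
    then show "D \<in> (\<Union>g\<in>Bad. {D. likelihood f D \<le> likelihood g D})" using o by auto
  qed
  have each: "measure_pmf.prob (iid n ?D) {D. likelihood f D \<le> likelihood g D} \<le> (1 - \<gamma> * \<beta>) ^ n"
    if g: "g \<in> Bad" for g
  proof -
    have gF: "g \<in> F" and mg: "md \<pi> h (alg g) > \<beta>" using g unfolding Bad_def by auto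
    have e: "emeasure (iid n ?D) {D. likelihood f D \<le> likelihood g D} \<le> ennreal ((1 - \<gamma> * md \<pi> h (alg g)) ^ n)"
      by (rule cher[OF h pol rf gF])
    have y0: "0 \<le> 1 - \<gamma> * md \<pi> h (alg g)"
      using gamma_le1 gamma_pos md_le1[of \<pi> h "alg g"] md_ge0[of \<pi> h "alg g"] by (simp add: mult_le_one)
    have "measure_pmf.prob (iid n ?D) {D. likelihood f D \<le> likelihood g D} \<le> (1 - \<gamma> * md \<pi> h (alg g)) ^ n"
      using e y0 by (simp add: measure_pmf.emeasure_eq_measure)
    also have "\<dots> \<le> (1 - \<gamma> * \<beta>) ^ n"
      by (rule power_mono) (use y0 mg gamma_pos in \<open>auto intro: mult_left_mono\<close>)
    finally show ?thesis .
  qed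
  have "measure_pmf.prob (iid n ?D) {D. md \<pi> h (\<lambda>x x'. sel (\<lambda>a. pmf (orcl h D x x') a)) > \<beta>}
      \<le> measure_pmf.prob (iid n ?D) (\<Union>g\<in>Bad. {D. likelihood f D \<le> likelihood g D})"
    by (rule measure_pmf.finite_measure_mono[OF sub]) simp
  also have "\<dots> \<le> (\<Sum>g\<in>Bad. measure_pmf.prob (iid n ?D) {D. likelihood f D \<le> likelihood g D})"
    by (rule measure_pmf.finite_measure_subadditive_finite[OF finB]) auto
  also have "\<dots> \<le> (\<Sum>g\<in>Bad. (1 - \<gamma> * \<beta>) ^ n)" by (rule sum_mono) (rule each)
  also have "\<dots> = real (card Bad) * (1 - \<gamma> * \<beta>) ^ n" by simp
  also have "\<dots> \<le> real (card F - 1) * (1 - \<gamma> * \<beta>) ^ n"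
    by (rule mult_right_mono) (use cB x0 in auto)
  finally show ?thesis .
qed

end


context TS begin

abbreviation "stage nD k \<equiv> tasid_stage A init T q Tc sinit \<rho> orcl sel nD k"

definition Good :: "real \<Rightarrow> nat \<Rightarrow> ('x \<Rightarrow> 'x \<Rightarrow> 'a) list \<Rightarrow> bool" where
  "Good \<beta> k \<alpha>s \<longleftrightarrow> length \<alpha>s = k \<and> aok A \<alpha>s \<and> (\<forall>j<k. md (polT \<alpha>s) (Suc j) (\<alpha>s ! j) \<le> \<beta>)"

lemma sel_A: "sel g \<in> A" using sel unfolding argmax_selector_def by auto

lemma stage_supp: "\<alpha>s \<in> set_pmf (stage nD k) \<Longrightarrow> length \<alpha>s = k \<and> aok A \<alpha>s"
proof (induction k arbitrary: \<alpha>s)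
  case 0
  then show ?case by (simp add: aok_def)
next
  case (Suc k)
  then obtain \<alpha>s0 D where "\<alpha>s0 \<in> set_pmf (stage nD k)" "\<alpha>s = \<alpha>s0 @ [\<lambda>x x'. sel (\<lambda>a. pmf (orcl (Suc k) D x x') a)]"
    by auto
  then show ?case using Suc.IH sel_A by (auto simp: aok_def)
qed

lemma polT_snoc_eq:
  assumes "length \<alpha>s = k" "1 \<le> j" "j \<le> Suc k" "length ys = j"
  shows "polT (\<alpha>s @ [\<alpha>]) j ys = polT \<alpha>s j ys"
proof -
  have "polT (\<alpha>s @ [\<alpha>]) j ys = polT (take (j - 1) (\<alpha>s @ [\<alpha>])) j ys"
    by (rule polT_take) (use assms in auto)
  also have "take (j - 1) (\<alpha>s @ [\<alpha>]) = take (j - 1) \<alpha>s" using assms by simp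
  also have "polT (take (j - 1) \<alpha>s) j ys = polT \<alpha>s j ys"
    by (rule polT_take[symmetric]) (use assms in auto)
  finally show ?thesis .
qed

lemma md_snoc_eq:
  assumes "length \<alpha>s = k" "j \<le> k"
  shows "md (polT (\<alpha>s @ [\<alpha>])) (Suc j) \<alpha>' = md (polT \<alpha>s) (Suc j) \<alpha>'"
proof -
  have "sample_triple A init T q (polT (\<alpha>s @ [\<alpha>])) (Suc j) = sample_triple A init T q (polT \<alpha>s) (Suc j)"
    by (rule sample_triple_cong) (rule polT_snoc_eq, use assms in auto)
  then show ?thesis unfolding md_def by simp
qed

lemma stage_good:
  assumes \<beta>: "0 \<le> \<beta>" "\<beta> \<le> 1"
  shows "k < H \<Longrightarrow> measure_pmf.prob (stage nD k) {\<alpha>s. Good \<beta> k \<alpha>s}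
     \<ge> 1 - real k * (real (card F - 1) * (1 - \<gamma> * \<beta>) ^ nD)"
proof (induction k)
  case 0
  have "{\<alpha>s. Good \<beta> 0 \<alpha>s} = {[]}" by (auto simp: Good_def aok_def)
  then show ?case by simp
next
  case (Suc k)
  let ?\<theta> = "real (card F - 1) * (1 - \<gamma> * \<beta>) ^ nD"
  have th0: "0 \<le> ?\<theta>" using gamma_le1 gamma_pos \<beta> by (simp add: mult_le_one)
  let ?ah = "\<lambda>D. \<lambda>x x'. sel (\<lambda>a. pmf (orcl (Suc k) D x x') a)"
  let ?N = "\<lambda>\<alpha>s. iid nD (sample_triple A init T q (polT \<alpha>s) (Suc k))"
  let ?in = "\<lambda>\<alpha>s. measure_pmf.prob (?N \<alpha>s) {D. Good \<beta> (Suc k) (\<alpha>s @ [?ah D])}"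
  let ?ind = "\<lambda>\<alpha>s. if Good \<beta> k \<alpha>s then 1 else 0 :: real"
  have P: "measure_pmf.prob (stage nD (Suc k)) {\<alpha>s. Good \<beta> (Suc k) \<alpha>s} =
    measure_pmf.expectation (stage nD k) ?in"
  proof -
    have "measure_pmf.prob (stage nD (Suc k)) {\<alpha>s. Good \<beta> (Suc k) \<alpha>s} =
      measure_pmf.expectation (stage nD k) (\<lambda>\<alpha>s. measure_pmf.expectation
        (map_pmf (\<lambda>D. \<alpha>s @ [?ah D]) (?N \<alpha>s)) (\<lambda>y. if y \<in> {\<alpha>s. Good \<beta> (Suc k) \<alpha>s} then 1 else 0))"
      unfolding prob_exp tasid_stage.simps by (rule exp_bind_glob[where B=1]) simp
    also have "\<dots> = measure_pmf.expectation (stage nD k) ?in"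
      by (simp add: prob_exp)
    finally show ?thesis .
  qed
  have pt: "?ind \<alpha>s - ?\<theta> \<le> ?in \<alpha>s" if as: "\<alpha>s \<in> set_pmf (stage nD k)" for \<alpha>s
  proof (cases "Good \<beta> k \<alpha>s")
    case False
    have i0: "0 \<le> ?in \<alpha>s" by simp
    have "?ind \<alpha>s = 0" using False by simp
    then show ?thesis using th0 i0 by linarith
  next
    case True
    have len: "length \<alpha>s = k" and ok: "aok A \<alpha>s" using True unfolding Good_def by auto
    have pol: "\<forall>j\<in>{1..H}. \<forall>ys. polT \<alpha>s j ys \<in> A" using polT_A[OF ok] len Suc.prems by simp
    have sub: "{D. \<not> md (polT \<alpha>s) (Suc k) (?ah D) > \<beta>} \<subseteq> {D. Good \<beta> (Suc k) (\<alpha>s @ [?ah D])}"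
    proof
      fix D assume D: "D \<in> {D. \<not> md (polT \<alpha>s) (Suc k) (?ah D) > \<beta>}"
      have "md (polT (\<alpha>s @ [?ah D])) (Suc j) ((\<alpha>s @ [?ah D]) ! j) \<le> \<beta>" if j: "j < Suc k" for j
      proof (cases "j < k")
        case True
        then have "(\<alpha>s @ [?ah D]) ! j = \<alpha>s ! j" using len by (simp add: nth_append)
        then show ?thesis using True md_snoc_eq[OF len, of j] \<open>Good \<beta> k \<alpha>s\<close> unfolding Good_def by auto
      next
        case False
        then have jk: "j = k" using j by simp
        then have "(\<alpha>s @ [?ah D]) ! j = ?ah D" using len by (metis nth_append_length)
        then show ?thesis using D jk md_snoc_eq[OF len, of k] by auto
      qed
      then show "D \<in> {D. Good \<beta> (Suc k) (\<alpha>s @ [?ah D])}"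
        using len ok sel_A unfolding Good_def by (auto simp: aok_def)
    qed
    have "measure_pmf.prob (?N \<alpha>s) {D. md (polT \<alpha>s) (Suc k) (?ah D) > \<beta>} \<le> ?\<theta>"
      by (rule stage_fail[OF _ _ pol \<beta>]) (use Suc.prems in auto)
    moreover have "measure_pmf.prob (?N \<alpha>s) {D. \<not> md (polT \<alpha>s) (Suc k) (?ah D) > \<beta>} =
       1 - measure_pmf.prob (?N \<alpha>s) {D. md (polT \<alpha>s) (Suc k) (?ah D) > \<beta>}"
      using measure_pmf.prob_compl[of "{D. md (polT \<alpha>s) (Suc k) (?ah D) > \<beta>}" "?N \<alpha>s"]
      by (simp add: Compl_eq_Diff_UNIV[symmetric] Collect_neg_eq)
    moreover have "measure_pmf.prob (?N \<alpha>s) {D. \<not> md (polT \<alpha>s) (Suc k) (?ah D) > \<beta>} \<le> ?in \<alpha>s"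
      by (rule measure_pmf.finite_measure_mono[OF sub]) simp
    ultimately show ?thesis using True by simp
  qed
  have "measure_pmf.expectation (stage nD k) (\<lambda>\<alpha>s. ?ind \<alpha>s - ?\<theta>) \<le> measure_pmf.expectation (stage nD k) ?in"
  proof (rule exp_mono[where B="1 + ?\<theta>"])
    fix y assume y: "y \<in> set_pmf (stage nD k)"
    show "\<bar>?ind y - ?\<theta>\<bar> \<le> 1 + ?\<theta>" using th0 by auto
    have i1: "?in y \<le> 1" by (rule measure_pmf.prob_le_1)
    have i0: "0 \<le> ?in y" by (rule measure_nonneg)
    show "\<bar>?in y\<bar> \<le> 1 + ?\<theta>" unfolding abs_le_iff using th0 i1 i0 by linarith
    show "?ind y - ?\<theta> \<le> ?in y" by (rule pt[OF y])
  qed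
  moreover have "measure_pmf.expectation (stage nD k) (\<lambda>\<alpha>s. ?ind \<alpha>s - ?\<theta>) =
     measure_pmf.expectation (stage nD k) ?ind - measure_pmf.expectation (stage nD k) (\<lambda>_. ?\<theta>)"
    by (rule exp_diff[where B="1 + ?\<theta>"]) (use th0 in auto)
  moreover have "measure_pmf.expectation (stage nD k) (\<lambda>_. ?\<theta>) = ?\<theta>" by (rule exp_const)
  moreover have "measure_pmf.expectation (stage nD k) ?ind = measure_pmf.prob (stage nD k) {\<alpha>s. Good \<beta> k \<alpha>s}"
    unfolding prob_exp by simp
  moreover have "measure_pmf.prob (stage nD k) {\<alpha>s. Good \<beta> k \<alpha>s} \<ge> 1 - real k * ?\<theta>"
    using Suc.IH Suc.prems by simp
  moreover have "real (Suc k) * ?\<theta> = real k * ?\<theta> + ?\<theta>" by (simp add: algebra_simps)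
  ultimately show ?case unfolding P by linarith
qed

end


definition nDf :: "nat \<Rightarrow> nat \<Rightarrow> nat \<Rightarrow> real \<Rightarrow> real \<Rightarrow> real \<Rightarrow> nat" where
  "nDf H cA cF \<eta> \<epsilon> \<delta> = (if cF \<le> 1 \<or> \<epsilon> \<ge> real H then 0 else
     nat \<lceil>16 * real H ^ 2 * real cA ^ 3 * ln (real H * real cF / \<delta>) / (\<epsilon> * (1 - 2 * \<eta>) ^ 2)\<rceil>)"

lemma ln2_ge: "1 / 2 \<le> ln (2::real)"
proof -
  have "ln (1 / 2 :: real) \<le> 1 / 2 - 1" by (rule ln_le_minus_one) simp
  then show ?thesis by (simp add: ln_div)
qed

lemma nD_bound:
  fixes H cA cF :: nat and \<eta> \<epsilon> \<delta> :: real
  assumes eta: "0 \<le> \<eta>" "\<eta> < 1/2" and e: "\<epsilon> > 0" and d: "0 < \<delta>" "\<delta> < 1" and cA: "cA \<ge> 1"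
  shows "real ((H - 1) * nDf H cA cF \<eta> \<epsilon> \<delta>) \<le>
    96 * real H ^ 4 * real cA ^ 3 * ln (real cF / \<delta>) / (\<epsilon> * (1 - 2 * \<eta>) ^ 2)"
proof -
  define D where "D = \<epsilon> * (1 - 2 * \<eta>) ^ 2"
  have Dp: "0 < D" unfolding D_def using e eta by simp
  have lnF0: "0 \<le> ln (real cF / \<delta>)"
  proof (cases "cF = 0")
    case False
    then have "1 \<le> real cF / \<delta>" using d by (simp add: field_simps)
    then show ?thesis by simp
  qed simp
  show ?thesis
  proof (cases "cF \<le> 1 \<or> \<epsilon> \<ge> real H")
    case True
    then have "nDf H cA cF \<eta> \<epsilon> \<delta> = 0" unfolding nDf_def by simp
    moreover have "0 \<le> 96 * real H ^ 4 * real cA ^ 3 * ln (real cF / \<delta>) / (\<epsilon> * (1 - 2 * \<eta>) ^ 2)"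
      using lnF0 Dp unfolding D_def by simp
    ultimately show ?thesis by simp
  next
    case False
    then have F2: "cF \<ge> 2" and eH: "\<epsilon> < real H" by auto
    have H1: "real H \<ge> 1" using eH e by (cases H) auto
    define lF where "lF = ln (real cF / \<delta>)"
    define L where "L = ln (real H * real cF / \<delta>)"
    have Fd: "2 \<le> real cF / \<delta>" using F2 d by (simp add: field_simps)
    have "ln 2 \<le> lF" unfolding lF_def using Fd by (subst ln_le_cancel_iff) auto
    then have l2: "1 / 2 \<le> lF" using ln2_ge by linarith
    have LL: "L = ln (real H) + lF" unfolding L_def lF_def 
    proof -
      have "real H * real cF / \<delta> = real H * (real cF / \<delta>)" by simp
      moreover have "ln (real H * (real cF / \<delta>)) = ln (real H) + ln (real cF / \<delta>)"
        using ln_mult[of "real H" "real cF / \<delta>"] H1 F2 d by simp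
      ultimately show "ln (real H * real cF / \<delta>) = ln (real H) + ln (real cF / \<delta>)" by simp
    qed
    have lnH: "ln (real H) \<le> real H" using ln_le_minus_one[of "real H"] H1 by simp
    have L3: "L \<le> 3 * real H * lF"
    proof -
      have "real H * 1 \<le> real H * (2 * lF)" by (rule mult_left_mono) (use l2 in auto)
      then have "real H \<le> 2 * real H * lF" by simp
      moreover have "lF \<le> real H * lF" using H1 l2 by (simp add: mult_le_cancel_right1)
      ultimately show ?thesis using LL lnH by linarith
    qed
    have "0 \<le> ln (real H)" using H1 by simp
    then have L0: "1 / 2 \<le> L" using LL l2 by linarith
    have DH: "D \<le> real H"
    proof -
      have "(1 - 2 * \<eta>) ^ 2 \<le> 1" using eta by (simp add: power_le_one)
      then have "D \<le> \<epsilon>" unfolding D_def using e by (simp add: mult_left_le)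
      then show ?thesis using eH by simp
    qed
    define K where "K = 16 * real H ^ 2 * real cA ^ 3 * L"
    define x where "x = K / D"
    have cA1: "1 \<le> real cA ^ 3" using cA by simp
    have KH: "real H \<le> K"
    proof -
      have "real H \<le> real H ^ 2" using H1 by (simp add: power2_eq_square)
      also have "\<dots> \<le> 16 * real H ^ 2 * real cA ^ 3 * L"
      proof -
        have "1 * (1 / 2) \<le> real cA ^ 3 * L" by (rule mult_mono) (use cA1 L0 in auto)
        then have "1 \<le> 16 * (real cA ^ 3 * L)" by simp
        then have "real H ^ 2 * 1 \<le> real H ^ 2 * (16 * (real cA ^ 3 * L))" by (rule mult_left_mono) simp
        then show ?thesis by (simp add: mult.assoc mult.left_commute)
      qed
      finally show ?thesis unfolding K_def .
    qed
    have x1: "1 \<le> x" unfolding x_def using KH DH Dp by (simp add: field_simps)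
    have nD: "nDf H cA cF \<eta> \<epsilon> \<delta> = nat \<lceil>x\<rceil>" unfolding nDf_def x_def K_def D_def L_def using False by simp
    have "real (nat \<lceil>x\<rceil>) \<le> 2 * x" using x1 by linarith
    then have "real ((H - 1) * nDf H cA cF \<eta> \<epsilon> \<delta>) \<le> real H * (2 * x)"
      unfolding nD using x1 by (simp add: of_nat_diff mult_mono)
    also have "\<dots> = 32 * real H ^ 3 * real cA ^ 3 * L / D" unfolding x_def K_def
      by (simp add: power2_eq_square power3_eq_cube)
    also have "\<dots> \<le> 32 * real H ^ 3 * real cA ^ 3 * (3 * real H * lF) / D"
      by (rule divide_right_mono, rule mult_left_mono) (use L3 Dp in auto)
    also have "\<dots> = 96 * real H ^ 4 * real cA ^ 3 * lF / D"
      by (simp add: power_Suc2[of "real H" 3, simplified] algebra_simps)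
    finally show ?thesis unfolding lF_def D_def .
  qed
qed


lemma alg1:
  fixes P a Hh e L :: real
  assumes "P > 0" "a > 0" "Hh > 0" "e > 0"
  shows "P / (16 * a^2) * (e / (Hh^2 * a)) * (16 * Hh^2 * a^3 * L / (e * P)) = L"
  using assms by (simp add: field_simps power2_eq_square power3_eq_cube)

context TS begin

lemma vtail_zero: "vtail T R q \<pi> 0 h xs = (\<lambda>s. 0)" by (rule ext) simp

lemma pv_bnd:
  assumes "Pol \<pi>"
  shows "0 \<le> policy_value H init T R q \<pi> \<and> policy_value H init T R q \<pi> \<le> real H"
  unfolding policy_value_def
  by (rule exp_bounds) (use vtail_bnd[OF assms] initS in auto)

lemma main_prob:
  assumes e: "\<epsilon> > 0" and d: "0 < \<delta>" "\<delta> < 1" and e0: "measure_pmf.prob init {s. s \<noteq> sinit} = \<epsilon>0"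
  shows "measure_pmf.prob (tasid H A init T q Tc sinit \<rho> orcl sel (nDf H (card A) (card F) \<eta> \<epsilon> \<delta>))
     {\<pi>. policy_value H init T R q \<pi> \<ge> policy_value H init T R q \<sigma> - \<epsilon> - real H * \<epsilon>0} \<ge> 1 - \<delta>"
proof -
  define nD where "nD = nDf H (card A) (card F) \<eta> \<epsilon> \<delta>"
  define Ev where "Ev = {\<pi>. policy_value H init T R q \<pi> \<ge> policy_value H init T R q \<sigma> - \<epsilon> - real H * \<epsilon>0}"
  have e00: "0 \<le> \<epsilon>0" using e0 by auto
  have tas: "measure_pmf.prob (tasid H A init T q Tc sinit \<rho> orcl sel nD) Ev =
      measure_pmf.prob (stage nD (H - 1)) {\<alpha>s. polT \<alpha>s \<in> Ev}"
    unfolding tasid_def by (simp add: vimage_def)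
  show ?thesis
  proof (cases "\<epsilon> \<ge> real H")
    case True
    have "\<alpha>s \<in> {\<alpha>s. polT \<alpha>s \<in> Ev}" if as: "\<alpha>s \<in> set_pmf (stage nD (H - 1))" for \<alpha>s
    proof (cases "H = 0")
      case True
      then show ?thesis unfolding Ev_def policy_value_def using e by (simp add: vtail_zero)
    next
      case False
      have sp: "length \<alpha>s = H - 1" "aok A \<alpha>s" using stage_supp[OF as] by auto
      have "Pol (polT \<alpha>s)" using Pol_polT[OF sp(2)] sp(1) False by simp
      then have "0 \<le> policy_value H init T R q (polT \<alpha>s)" using pv_bnd by blast
      moreover have "policy_value H init T R q \<sigma> \<le> real H" using pv_bnd[OF Pol_sigma] by blast
      moreover have "0 \<le> real H * \<epsilon>0" using e00 by simp
      ultimately show ?thesis unfolding Ev_def using True by simp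
    qed
    then have "measure_pmf.prob (stage nD (H - 1)) {\<alpha>s. polT \<alpha>s \<in> Ev} = 1"
      by (subst measure_pmf.prob_eq_1) (auto simp: AE_measure_pmf_iff)
    then show ?thesis using tas d unfolding nD_def Ev_def by simp
  next
    case False
    then have eH: "\<epsilon> < real H" by simp
    have H1: "1 \<le> H" using eH e by (cases H) auto
    have HH: "1 \<le> real H" using H1 by simp
    define \<beta> where "\<beta> = \<epsilon> / (real H ^ 2 * real (card A))"
    have cA: "1 \<le> real (card A)" using cardA by simp
    have b0: "0 \<le> \<beta>" unfolding \<beta>_def using e by simp
    have b1: "\<beta> \<le> 1"
    proof -
      have "real H \<le> real H ^ 2 * real (card A)"
      proof -
        have "1 * 1 \<le> real H * real (card A)" by (rule mult_mono) (use HH cA in auto)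
        then have "real H * 1 \<le> real H * (real H * real (card A))"
          by (intro mult_left_mono) auto
        then show ?thesis by (simp add: power2_eq_square mult.assoc)
      qed
      then show ?thesis unfolding \<beta>_def using eH HH by (simp add: divide_le_eq_1)
    qed
    define \<theta> where "\<theta> = real (card F - 1) * (1 - \<gamma> * \<beta>) ^ nD"
    have sg: "measure_pmf.prob (stage nD (H - 1)) {\<alpha>s. Good \<beta> (H - 1) \<alpha>s} \<ge> 1 - real (H - 1) * \<theta>"
      unfolding \<theta>_def by (rule stage_good[OF b0 b1]) (use H1 in simp)
    have good_ev: "{\<alpha>s. Good \<beta> (H - 1) \<alpha>s} \<subseteq> {\<alpha>s. polT \<alpha>s \<in> Ev}"
    proof
      fix \<alpha>s assume "\<alpha>s \<in> {\<alpha>s. Good \<beta> (H - 1) \<alpha>s}"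
      then have len: "length \<alpha>s = H - 1" and ok: "aok A \<alpha>s"
        and mdb: "\<forall>j<H - 1. md (polT \<alpha>s) (Suc j) (\<alpha>s ! j) \<le> \<beta>" unfolding Good_def by auto
      have pol: "\<forall>j\<in>{1..H}. \<forall>ys. polT \<alpha>s j ys \<in> A" using polT_A[OF ok] len H1 by simp
      have ex: "exec init T q (polT \<alpha>s) (mis \<alpha>s) (1 + i) \<le> real (card A) * \<beta>" if i: "i < H - 1" for i
      proof -
        have "exec init T q (polT \<alpha>s) (mis \<alpha>s) (1 + i) \<le> real (card A) * md (polT \<alpha>s) (1 + i) (\<alpha>s ! (1 + i - 1))"
          by (rule exec_bound[OF pol]) (use i in auto)
        also have "\<dots> \<le> real (card A) * \<beta>" using mdb i by (intro mult_left_mono) auto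
        finally show ?thesis .
      qed
      have "(\<Sum>i<H - 1. exec init T q (polT \<alpha>s) (mis \<alpha>s) (1 + i)) \<le> (\<Sum>i<H - 1. real (card A) * \<beta>)"
        by (rule sum_mono) (use ex in auto)
      also have "\<dots> = real (H - 1) * real (card A) * \<beta>" by simp
      finally have S1: "(\<Sum>i<H - 1. exec init T q (polT \<alpha>s) (mis \<alpha>s) (1 + i)) \<le> real (H - 1) * real (card A) * \<beta>" .
      have S2: "real (H - 1) * (\<Sum>i<H - 1. exec init T q (polT \<alpha>s) (mis \<alpha>s) (1 + i)) \<le>
          real (H - 1) * (real (H - 1) * real (card A) * \<beta>)"
        by (rule mult_left_mono[OF S1]) simp
      have S3: "real (H - 1) * (real (H - 1) * real (card A) * \<beta>) \<le> \<epsilon>"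
      proof -
        have "real (H - 1) * (real (H - 1) * real (card A) * \<beta>) = real (H - 1) ^ 2 / real H ^ 2 * \<epsilon>"
          unfolding \<beta>_def using cA by (simp add: power2_eq_square field_simps)
        also have "\<dots> \<le> 1 * \<epsilon>"
        proof (rule mult_right_mono)
          have "real (H - 1) \<le> real H" by simp
          then have "real (H - 1) ^ 2 \<le> real H ^ 2" by (intro power_mono) auto
          then show "real (H - 1) ^ 2 / real H ^ 2 \<le> 1" using HH by (simp add: divide_le_eq_1)
        qed (use e in simp)
        finally show ?thesis by simp
      qed
      have "policy_value H init T R q \<sigma> - real H * \<epsilon>0
         - real (H - 1) * (\<Sum>i<H - 1. exec init T q (polT \<alpha>s) (mis \<alpha>s) (1 + i))
         \<le> policy_value H init T R q (polT \<alpha>s)"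
        using V_lemma[OF ok len H1] e0 by simp
      then show "\<alpha>s \<in> {\<alpha>s. polT \<alpha>s \<in> Ev}" unfolding Ev_def using S2 S3 by simp
    qed
    have th: "real (H - 1) * \<theta> \<le> \<delta>"
    proof (cases "card F \<le> 1")
      case True
      then have "\<theta> = 0" unfolding \<theta>_def by simp
      then show ?thesis using d by simp
    next
      case cF: False
      define L where "L = ln (real H * real (card F) / \<delta>)"
      define x where "x = 16 * real H ^ 2 * real (card A) ^ 3 * L / (\<epsilon> * (1 - 2 * \<eta>) ^ 2)"
      have nDx: "nD = nat \<lceil>x\<rceil>" unfolding nD_def nDf_def x_def L_def using cF False by simp
      have pos: "0 < real H * real (card F) / \<delta>" using HH cF d by simp
      have L0: "0 \<le> L"
      proof -
        have "1 * 1 \<le> real H * real (card F)" by (rule mult_mono) (use HH cF in auto)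
        then have "1 \<le> real H * real (card F) / \<delta>" using d by (simp add: field_simps)
        then show ?thesis unfolding L_def by simp
      qed
      have x0: "0 \<le> x" unfolding x_def using L0 e eta1 by simp
      have gb: "\<gamma> * \<beta> * x = L"
        unfolding \<gamma>_def \<beta>_def x_def by (rule alg1) (use e eta1 HH cA in auto)
      have gb0: "0 \<le> \<gamma> * \<beta>" using gamma_pos b0 by simp
      have gb1: "\<gamma> * \<beta> \<le> 1" using gamma_le1 gamma_pos b0 b1 by (simp add: mult_le_one)
      have "(1 - \<gamma> * \<beta>) ^ nD \<le> exp (- (\<gamma> * \<beta>)) ^ nD"
        by (rule power_mono) (use exp_ge_add_one_self[of "- (\<gamma> * \<beta>)"] gb1 in auto)
      also have "\<dots> = exp (- (\<gamma> * \<beta>) * real nD)" by (simp add: exp_of_nat_mult[symmetric] mult.commute)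
      also have "\<dots> \<le> exp (- (\<gamma> * \<beta>) * x)"
      proof -
        have "x \<le> real nD" unfolding nDx by linarith
        then show ?thesis using gb0 by (simp add: mult_left_mono)
      qed
      also have "\<dots> = exp (- L)" using gb by (simp add: mult.assoc)
      also have "\<dots> = \<delta> / (real H * real (card F))"
      proof -
        have "exp L = real H * real (card F) / \<delta>" unfolding L_def using pos by simp
        then show ?thesis by (simp add: exp_minus)
      qed
      finally have pw: "(1 - \<gamma> * \<beta>) ^ nD \<le> \<delta> / (real H * real (card F))" .
      have "\<theta> \<le> real (card F - 1) * (\<delta> / (real H * real (card F)))"
        unfolding \<theta>_def by (rule mult_left_mono[OF pw]) simp
      also have "\<dots> \<le> real (card F) * (\<delta> / (real H * real (card F)))"
        by (rule mult_right_mono) (use d HH in auto)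
      also have "\<dots> = \<delta> / real H" using cF by simp
      finally have "\<theta> \<le> \<delta> / real H" .
      then have "real (H - 1) * \<theta> \<le> real (H - 1) * (\<delta> / real H)" by (rule mult_left_mono) simp
      also have "\<dots> \<le> real H * (\<delta> / real H)" by (rule mult_right_mono) (use d HH in auto)
      also have "\<dots> = \<delta>" using HH by simp
      finally show ?thesis .
    qed
    have "measure_pmf.prob (stage nD (H - 1)) {\<alpha>s. Good \<beta> (H - 1) \<alpha>s} \<le> measure_pmf.prob (stage nD (H - 1)) {\<alpha>s. polT \<alpha>s \<in> Ev}"
      by (rule measure_pmf.finite_measure_mono[OF good_ev]) simp
    then show ?thesis using tas sg th unfolding nD_def Ev_def by linarith
  qed
qed

end


lemma aux_bound:
  assumes "det_simulator H S A sinit Tc Rc" "0 \<le> \<eta>" "\<eta> < 1/2" "\<epsilon> > 0" "0 < \<delta>" "\<delta> < 1"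
  shows "real ((H - 1) * nDf H (card A) (card F) \<eta> \<epsilon> \<delta>)
        \<le> 96 * real H ^ 4 * real (card A) ^ 3 * ln (real (card F) / \<delta>) / (\<epsilon> * (1 - 2 * \<eta>) ^ 2)"
proof -
  have "card A \<ge> 1" using assms(1) unfolding det_simulator_def by (simp add: Suc_leI card_gt_0_iff)
  then show ?thesis by (rule nD_bound[OF assms(2,3,4,5,6)])
qed

lemma aux_prob:
  assumes ds: "det_simulator H S A sinit Tc Rc" and bm: "block_mdp H S A init T R q"
    and eta: "0 \<le> \<eta>" "\<eta> < 1/2" and ep: "eta_perturbation H S A Tc Rc T R \<eta>"
    and e0: "measure_pmf.prob init {s. s \<noteq> sinit} = \<epsilon>0"
    and fin: "finite F" and Fs: "\<forall>f\<in>F. \<forall>x x'. set_pmf (f x x') \<subseteq> A"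
    and rz: "realizable H S A init T q F"
    and e: "\<epsilon> > 0" and d: "0 < \<delta>" "\<delta> < 1"
    and ro: "rdp_output H S A Tc Rc \<eta> \<rho>" and mo: "mle_oracle H F orcl" and sl: "argmax_selector A sel"
  shows "measure_pmf.prob (tasid H A init T q Tc sinit \<rho> orcl sel (nDf H (card A) (card F) \<eta> \<epsilon> \<delta>))
           {\<pi>. policy_value H init T R q \<pi>
                 \<ge> policy_value H init T R q (compose_decoder S q \<rho>) - \<epsilon> - real H * \<epsilon>0}
           \<ge> 1 - \<delta>"
proof -
  obtain \<xi> where xi: "\<forall>h\<in>{1..H}. \<forall>s\<in>S. \<forall>a\<in>A.
          set_pmf (\<xi> h s a) \<subseteq> A \<and> pmf (\<xi> h s a) a \<ge> 1 - \<eta> \<and>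
          (\<forall>s'. pmf (T h s a) s' = (\<Sum>a'\<in>A. (if Tc h s a' = s' then 1 else 0) * pmf (\<xi> h s a) a')) \<and>
          R h s a = (\<Sum>a'\<in>A. Rc h s a' * pmf (\<xi> h s a) a')"
    using ep unfolding eta_perturbation_def by blast
  have xi': "\<forall>h\<in>{1..H}. \<forall>s\<in>S. \<forall>a\<in>A. set_pmf (\<xi> h s a) \<subseteq> A \<and> pmf (\<xi> h s a) a \<ge> 1 - \<eta> \<and>
          (\<forall>s'. pmf (T h s a) s' = (\<Sum>a'\<in>A. (if Tc h s a' = s' then 1 else 0) * pmf (\<xi> h s a) a'))"
    using xi by blast
  have rho: "\<forall>h\<in>{1..H}. \<forall>s\<in>S. \<rho> h s \<in> A" using ro unfolding rdp_output_def by blast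
  interpret TS H S A sinit Tc Rc init T R q \<eta> F \<xi> \<rho> orcl sel
    by (unfold_locales) (use ds bm eta xi' fin Fs rz rho mo sl in auto)
  show ?thesis by (rule main_prob[OF e d e0])
qed

theorem theorem3:
  "\<exists>C :: real. C > 0 \<and>
   (\<exists>nD :: nat \<Rightarrow> nat \<Rightarrow> nat \<Rightarrow> real \<Rightarrow> real \<Rightarrow> real \<Rightarrow> nat.
    \<forall>(H :: nat) (S :: 's set) (A :: 'a set) (sinit :: 's) Tc Rc (init :: 's pmf) T R
      (q :: 's \<Rightarrow> 'x pmf) (\<eta> :: real) (\<epsilon>0 :: real) (F :: ('x \<Rightarrow> 'x \<Rightarrow> 'a pmf) set) (\<epsilon> :: real) (\<delta> :: real).
      det_simulator H S A sinit Tc Rc \<and>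
      block_mdp H S A init T R q \<and>
      0 \<le> \<eta> \<and> \<eta> < 1/2 \<and> eta_perturbation H S A Tc Rc T R \<eta> \<and>
      measure_pmf.prob init {s. s \<noteq> sinit} = \<epsilon>0 \<and>
      finite F \<and> (\<forall>f\<in>F. \<forall>x x'. set_pmf (f x x') \<subseteq> A) \<and>
      realizable H S A init T q F \<and>
      \<epsilon> > 0 \<and> 0 < \<delta> \<and> \<delta> < 1
      \<longrightarrow>
      real ((H - 1) * nD H (card A) (card F) \<eta> \<epsilon> \<delta>)
        \<le> C * real H ^ 4 * real (card A) ^ 3 * ln (real (card F) / \<delta>) / (\<epsilon> * (1 - 2 * \<eta>) ^ 2) \<and>
      (\<forall>\<rho> oracle sel.
         rdp_output H S A Tc Rc \<eta> \<rho> \<and> mle_oracle H F oracle \<and> argmax_selector A sel \<longrightarrow>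
         measure_pmf.prob (tasid H A init T q Tc sinit \<rho> oracle sel (nD H (card A) (card F) \<eta> \<epsilon> \<delta>))
           {\<pi>. policy_value H init T R q \<pi>
                 \<ge> policy_value H init T R q (compose_decoder S q \<rho>) - \<epsilon> - real H * \<epsilon>0}
           \<ge> 1 - \<delta>))"
  apply (rule exI[where x=96])
  apply (rule conjI)
   apply simp
  apply (rule exI[where x=nDf])
  apply (intro allI impI)
  apply (elim conjE)
  apply (rule conjI)
   apply (rule aux_bound; assumption)
  apply (intro allI impI)
  apply (elim conjE)
  apply (rule aux_prob; assumption)
  done


end
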